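(* Let $(E,\phi)$ be an abelian $t$-module of dimension $d$ over $K$ and $D\in\mathrm{Mat}_{d\times d}(K\{\tau\})$ the matrix representing $\phi_t$ in a fixed coordinate system. Then there exists $n\ge1$ such that, with $s$ the maximal $\tau$-degree of all entries of $D,D^2,\dots,D^n$, the block column matrix with blocks $\sigma^sD,\sigma^sD^2,\dots,\sigma^sD^n$ (stacked vertically, in $\mathrm{Mat}_{nd\times d}(K\{\sigma\})$) has rank $d$ modulo $\sigma^s$.
   Context: $\mathbb{F}_q$ finite field, $K$ perfect field containing $\mathbb{F}_q$, $\ell:\mathbb{F}_q[t]\to K$ an $\mathbb{F}_q$-algebra homomorphism. $K\{\tau\}$: skew polynomials with $\tau\alpha=\alpha^q\tau$, identified with $\mathbb{F}_q$-linear endomorphisms of $\mathbb{G}_a$. $K(\!(\sigma)\!)$: skew Laurent series with $\sigma\alpha=\alpha^{1/q}\sigma$, valuation ring $K[\![\sigma]\!]$, containing $K\{\sigma\}$; $K\{\tau\}\subseteq K(\!(\sigma)\!)$ via $\tau\mapsto\sigma^{-1}$. A $t$-module $(E,\phi)$ of dimension $d$: $\mathbb{F}_q$-vector space scheme $E\cong\mathbb{G}_a^d$ over $K$ with $\mathbb{F}_q$-algebra homomorphism $\phi:\mathbb{F}_q[t]\to\mathrm{End}_{\mathrm{grp},\mathbb{F}_q}(E)$, $d\phi_a-\ell(a)$ nilpotent on $\mathrm{Lie}(E)$; in a fixed coordinate system $\phi_t$ is a matrix $D$ over $K\{\tau\}$. $E$ is abelian if its $t$-motive $\mathrm{Hom}_{\mathrm{grp},\mathbb{F}_q}(E,\mathbb{G}_a)$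 ($K\{\tau\}$ acting by post-composition, $t$ by pre-composition with $\phi_t$) is finitely generated as $K[t]$-module. Rank modulo $\sigma^s$: a matrix $B$ over $K[\![\sigma]\!]$ is diagonalized by elementary row and column operations to non-zero diagonal entries $\sigma^{\nu_1},\dots,\sigma^{\nu_n}$; it has rank $r$ modulo $\sigma^s$ if $\#\{i:\nu_i<s\}=r$. *)

theory Defs
  imports "HOL-Computational_Algebra.Polynomial"
begin

definition perfect_field :: "'k::field itself \<Rightarrow> bool" where
  "perfect_field T \<longleftrightarrow> CHAR('k) = 0 \<or> surj (\<lambda>x::'k. x ^ CHAR('k))"

definition is_subfield :: "'k::field set \<Rightarrow> bool" where
  "is_subfield F \<longleftrightarrow> 0 \<in> F \<and> 1 \<in> F \<and> (\<forall>x\<in>F. \<forall>y\<in>F. x + y \<in> F \<and> x * y \<in> F)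
     \<and> (\<forall>x\<in>F. - x \<in> F) \<and> (\<forall>x\<in>F. x \<noteq> 0 \<longrightarrow> inverse x \<in> F)"

text \<open>Inverse of the q-Frobenius x \<mapsto> x^q (a bijection on a perfect field containing F_q).\<close>
definition frobinv :: "nat \<Rightarrow> 'k::field \<Rightarrow> 'k" where
  "frobinv q = inv (\<lambda>y::'k. y ^ q)"

section \<open>Skew polynomials K{tau}, tau a = a^q tau\<close>

text \<open>An element sum a_i tau^i of K{tau} is represented by the polynomial with coefficients a_i;
  only the multiplication is twisted.\<close>
definition tmult :: "nat \<Rightarrow> 'k::field poly \<Rightarrow> 'k poly \<Rightarrow> 'k poly" where
  "tmult q f g = (\<Sum>i\<le>degree f. \<Sum>j\<le>degree g. monom (coeff f i * (coeff g j) ^ (q ^ i)) (i + j))"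

text \<open>d x d matrices over K{tau}, as functions on indices below d.\<close>
type_synonym 'k tmat = "nat \<Rightarrow> nat \<Rightarrow> 'k poly"

definition tmatmul :: "nat \<Rightarrow> nat \<Rightarrow> 'k::field tmat \<Rightarrow> 'k tmat \<Rightarrow> 'k tmat" where
  "tmatmul q d A B = (\<lambda>i j. \<Sum>l<d. tmult q (A i l) (B l j))"

definition tmat_one :: "'k::field tmat" where
  "tmat_one = (\<lambda>i j. if i = j then 1 else 0)"

fun tmatpow :: "nat \<Rightarrow> nat \<Rightarrow> 'k::field tmat \<Rightarrow> nat \<Rightarrow> 'k tmat" where
  "tmatpow q d D 0 = tmat_one"
| "tmatpow q d D (Suc k) = tmatmul q d (tmatpow q d D k) D"

definition trowmul :: "nat \<Rightarrow> nat \<Rightarrow> (nat \<Rightarrow> 'k::field poly) \<Rightarrow> 'k tmat \<Rightarrow> (nat \<Rightarrow> 'k poly)" where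
  "trowmul q d m A = (\<lambda>j. \<Sum>l<d. tmult q (m l) (A l j))"

definition kmatmul :: "nat \<Rightarrow> (nat \<Rightarrow> nat \<Rightarrow> 'k::field) \<Rightarrow> (nat \<Rightarrow> nat \<Rightarrow> 'k) \<Rightarrow> (nat \<Rightarrow> nat \<Rightarrow> 'k)" where
  "kmatmul d A B = (\<lambda>i j. \<Sum>l<d. A i l * B l j)"

fun kmatpow :: "nat \<Rightarrow> (nat \<Rightarrow> nat \<Rightarrow> 'k::field) \<Rightarrow> nat \<Rightarrow> (nat \<Rightarrow> nat \<Rightarrow> 'k)" where
  "kmatpow d A 0 = (\<lambda>i j. if i = j then 1 else 0)"
| "kmatpow d A (Suc k) = kmatmul d (kmatpow d A k) A"

definition knilpotent :: "nat \<Rightarrow> (nat \<Rightarrow> nat \<Rightarrow> 'k::field) \<Rightarrow> bool" where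
  "knilpotent d A \<longleftrightarrow> (\<exists>N. \<forall>i<d. \<forall>j<d. kmatpow d A N i j = 0)"

text \<open>(G_a^d, phi) with phi_t = D (phi is determined by phi_t since F_q[t] is free on t),
  theta = ell(t).  Condition: d(phi_t) - ell(t) is nilpotent on Lie(E); d(phi_t) is the
  matrix of constant terms of D.\<close>
definition is_tmodule :: "'k::field \<Rightarrow> nat \<Rightarrow> 'k tmat \<Rightarrow> bool" where
  "is_tmodule \<theta> d D \<longleftrightarrow> knilpotent d (\<lambda>i j. coeff (D i j) 0 - (if i = j then \<theta> else 0))"

text \<open>The t-motive M = Hom(E, G_a) = row vectors of length d over K{tau}; K acts by
  left multiplication (post-composition), t by m \<mapsto> m D (pre-composition with phi_t).
  E is abelian iff M is finitely generated as a K[t]-module.\<close>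
definition tmotive_scal :: "'k::field \<Rightarrow> (nat \<Rightarrow> 'k poly) \<Rightarrow> (nat \<Rightarrow> 'k poly)" where
  "tmotive_scal c m = (\<lambda>j. smult c (m j))"

definition is_abelian :: "nat \<Rightarrow> nat \<Rightarrow> 'k::field tmat \<Rightarrow> bool" where
  "is_abelian q d D \<longleftrightarrow>
     (\<exists>gens :: (nat \<Rightarrow> 'k poly) list.
        \<forall>m :: nat \<Rightarrow> 'k poly. \<exists>N (c :: nat \<Rightarrow> nat \<Rightarrow> 'k).
          \<forall>j<d. m j = (\<Sum>g<length gens. \<Sum>k<N.
                          tmotive_scal (c g k) (trowmul q d (gens ! g) (tmatpow q d D k)) j))"

section \<open>Skew power series K[[sigma]], sigma a = a^(1/q) sigma\<close>

type_synonym 'k sser = "nat \<Rightarrow> 'k"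

definition smul :: "nat \<Rightarrow> 'k::field sser \<Rightarrow> 'k sser \<Rightarrow> 'k sser" where
  "smul q a b = (\<lambda>n. \<Sum>i\<le>n. a i * (frobinv q ^^ i) (b (n - i)))"

definition sadd :: "'k::field sser \<Rightarrow> 'k sser \<Rightarrow> 'k sser" where
  "sadd a b = (\<lambda>n. a n + b n)"

definition sone :: "'k::field sser" where
  "sone = (\<lambda>n. if n = 0 then 1 else 0)"

definition szero :: "'k::field sser" where
  "szero = (\<lambda>n. 0)"

definition spow :: "nat \<Rightarrow> 'k::field sser" where
  "spow k = (\<lambda>n. if n = k then 1 else 0)"

definition sunit :: "nat \<Rightarrow> 'k::field sser \<Rightarrow> bool" where
  "sunit q u \<longleftrightarrow> (\<exists>v. smul q u v = sone \<and> smul q v u = sone)"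

type_synonym 'k smat = "nat \<Rightarrow> nat \<Rightarrow> 'k sser"

text \<open>Elementary row operations (row vectors multiplied on the left) and elementary
  column operations (column vectors multiplied on the right) on an m x c matrix.\<close>
inductive selem_reach :: "nat \<Rightarrow> nat \<Rightarrow> nat \<Rightarrow> 'k::field smat \<Rightarrow> 'k smat \<Rightarrow> bool"
  for q m c where
  refl: "selem_reach q m c A A"
| row_add: "selem_reach q m c A B \<Longrightarrow> i < m \<Longrightarrow> j < m \<Longrightarrow> i \<noteq> j \<Longrightarrow>
     selem_reach q m c A (B(i := (\<lambda>k. sadd (B i k) (smul q x (B j k)))))"
| row_swap: "selem_reach q m c A B \<Longrightarrow> i < m \<Longrightarrow> j < m \<Longrightarrow>
     selem_reach q m c A (B(i := B j, j := B i))"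
| row_scale: "selem_reach q m c A B \<Longrightarrow> i < m \<Longrightarrow> sunit q u \<Longrightarrow>
     selem_reach q m c A (B(i := (\<lambda>k. smul q u (B i k))))"
| col_add: "selem_reach q m c A B \<Longrightarrow> i < c \<Longrightarrow> j < c \<Longrightarrow> i \<noteq> j \<Longrightarrow>
     selem_reach q m c A (\<lambda>r. (B r)(i := sadd (B r i) (smul q (B r j) x)))"
| col_swap: "selem_reach q m c A B \<Longrightarrow> i < c \<Longrightarrow> j < c \<Longrightarrow>
     selem_reach q m c A (\<lambda>r. (B r)(i := B r j, j := B r i))"
| col_scale: "selem_reach q m c A B \<Longrightarrow> i < c \<Longrightarrow> sunit q u \<Longrightarrow>
     selem_reach q m c A (\<lambda>r. (B r)(i := smul q (B r i) u))"

text \<open>An m x c matrix B over K[[sigma]] has rank r modulo sigma^s: it can be diagonalized by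
  elementary row and column operations to nonzero diagonal entries sigma^(nu_i), and
  exactly r of the nu_i are below s.\<close>
definition rank_mod_sigma :: "nat \<Rightarrow> nat \<Rightarrow> nat \<Rightarrow> 'k::field smat \<Rightarrow> nat \<Rightarrow> nat \<Rightarrow> bool" where
  "rank_mod_sigma q m c B s r \<longleftrightarrow>
     (\<exists>C \<nu>. selem_reach q m c B C
        \<and> (\<forall>i<m. \<forall>j<c. C i j = (if i = j then spow (\<nu> i) else szero))
        \<and> card {i. i < min m c \<and> \<nu> i < s} = r)"

text \<open>For f = sum a_i tau^i in K{tau} with deg f \<le> s, and tau = sigma^(-1):
  sigma^s f = sum_i a_i^(q^(-s)) sigma^(s-i) \<in> K{sigma}.\<close>
definition sigma_shift :: "nat \<Rightarrow> nat \<Rightarrow> 'k::field poly \<Rightarrow> 'k sser" where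
  "sigma_shift q s f = (\<lambda>n. if n \<le> s then (frobinv q ^^ s) (coeff f (s - n)) else 0)"

definition max_tdeg :: "nat \<Rightarrow> nat \<Rightarrow> 'k::field tmat \<Rightarrow> nat \<Rightarrow> nat" where
  "max_tdeg q d D n = Max (insert 0 {degree (tmatpow q d D k i j) | k i j. 1 \<le> k \<and> k \<le> n \<and> i < d \<and> j < d})"

text \<open>The (n d) x d block column matrix with blocks sigma^s D, ..., sigma^s D^n;
  row k*d + i (k < n, i < d) is row i of sigma^s D^(k+1).\<close>
definition block_col :: "nat \<Rightarrow> nat \<Rightarrow> 'k::field tmat \<Rightarrow> nat \<Rightarrow> nat \<Rightarrow> 'k smat" where
  "block_col q d D n s = (\<lambda>r j. sigma_shift q s (tmatpow q d D (r div d + 1) (r mod d) j))"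

end

theory Submission
  imports Defs "HOL-Algebra.Sylow" "HOL-Algebra.Multiplicative_Group" "HOL-Library.Function_Algebras"
begin

lemma pow_additive:
  fixes M :: "('k::field, 'b) monoid_scheme"
  assumes "monoid.mult M = (+)" "one M = 0"
  shows "pow M x n = of_nat n * x"
  by (induction n) (simp_all add: nat_pow_def assms algebra_simps)

lemma subfield_of_nat:
  assumes "is_subfield F" shows "of_nat n \<in> F"
  using assms by (induction n) (auto simp: is_subfield_def)

lemma char_pos_of_finite_subfield:
  fixes F :: "'k::field set"
  assumes "is_subfield F" "finite F"
  shows "CHAR('k) > 0"
proof -
  have "range (of_nat :: nat \<Rightarrow> 'k) \<subseteq> F" using subfield_of_nat[OF assms(1)] by auto
  hence "finite (range (of_nat :: nat \<Rightarrow> 'k))" using assms(2) finite_subset by blast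
  hence "\<not> inj (of_nat :: nat \<Rightarrow> 'k)" using finite_imageD infinite_UNIV_nat by blast
  then obtain a b where ab: "a \<noteq> b" "(of_nat a :: 'k) = of_nat b" unfolding inj_def by blast
  then obtain a b where ab: "a < b" "(of_nat a :: 'k) = of_nat b"
    by (metis nat_neq_iff)
  hence "(of_nat (b - a) :: 'k) = 0" by (simp add: of_nat_diff)
  thus ?thesis using ab(1) CHAR_pos_iff by (metis zero_less_diff)
qed

lemma card_subfield_prime_power:
  fixes F :: "'k::field set"
  assumes sf: "is_subfield F" and fin: "finite F"
  shows "\<exists>e. card F = CHAR('k) ^ e"
proof -
  define p where "p = CHAR('k)"
  have ppos: "p > 0" using char_pos_of_finite_subfield[OF sf fin] p_def by simp
  have pprime: "prime p" using ppos prime_CHAR_semidom[where ?'a='k] p_def by simp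
  define G where "G = \<lparr>carrier = F, monoid.mult = (+), one = (0::'k)\<rparr>"
  have grp: "group G"
  proof (rule groupI)
    show "\<And>x y. x \<in> carrier G \<Longrightarrow> y \<in> carrier G \<Longrightarrow> x \<otimes>\<^bsub>G\<^esub> y \<in> carrier G"
      using sf by (auto simp: G_def is_subfield_def)
    show "\<one>\<^bsub>G\<^esub> \<in> carrier G" using sf by (auto simp: G_def is_subfield_def)
    show "\<And>x y z. x \<in> carrier G \<Longrightarrow> y \<in> carrier G \<Longrightarrow> z \<in> carrier G \<Longrightarrow>
      x \<otimes>\<^bsub>G\<^esub> y \<otimes>\<^bsub>G\<^esub> z = x \<otimes>\<^bsub>G\<^esub> (y \<otimes>\<^bsub>G\<^esub> z)"
      by (simp add: G_def add.assoc)
    show "\<And>x. x \<in> carrier G \<Longrightarrow> \<one>\<^bsub>G\<^esub> \<otimes>\<^bsub>G\<^esub> x = x" by (simp add: G_def)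
    show "\<And>x. x \<in> carrier G \<Longrightarrow> \<exists>y\<in>carrier G. y \<otimes>\<^bsub>G\<^esub> x = \<one>\<^bsub>G\<^esub>"
      using sf by (auto simp: G_def is_subfield_def intro!: bexI[of _ "- _"])
  qed
  have card0: "card F \<noteq> 0" using sf fin by (auto simp: is_subfield_def)
  have "\<exists>k. normalize (card F) = p ^ k"
  proof (rule ccontr)
    assume "\<nexists>k. normalize (card F) = p ^ k"
    then obtain r where r: "r \<in> prime_factors (card F)" "r \<noteq> p"
      using Ex_other_prime_factor[OF card0 _ pprime] by blast
    have rprime: "prime r" using r by auto
    define a where "a = multiplicity r (card F)"
    have "r ^ a dvd card F" unfolding a_def by (rule multiplicity_dvd)
    then obtain m where m: "card F = r ^ a * m" by (elim dvdE)
    have "multiplicity r (card F) > 0" using r(1) unfolding prime_factors_multiplicity by simp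
    hence "a \<ge> 1" unfolding a_def by simp
    have oG: "order G = r ^ a * m" by (simp add: order_def G_def m)
    have fG: "finite (carrier G)" by (simp add: G_def fin)
    obtain H where H: "subgroup H G" "card H = r ^ a"
      using sylow_thm[OF rprime grp oG fG] by blast
    obtain a' where a': "a = Suc a'" using \<open>a \<ge> 1\<close> by (cases a) auto
    have "1 \<le> r ^ a'" using prime_gt_0_nat[OF rprime] by simp
    hence "r \<le> r ^ a" unfolding a' by simp
    hence c2: "card H \<ge> 2" using H(2) prime_ge_2_nat[OF rprime] by linarith
    have "H \<subseteq> carrier G" using H(1) by (rule subgroup.subset)
    hence HF: "H \<subseteq> F" by (simp add: G_def)
    hence finH: "finite H" using fin finite_subset by blast
    have "\<not> H \<subseteq> {0}"
    proof
      assume "H \<subseteq> {0}"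
      hence "card H \<le> card {0::'k}" by (rule card_mono[rotated]) simp
      thus False using c2 by simp
    qed
    then obtain x where x: "x \<in> H" "x \<noteq> 0" by blast
    interpret HG: group "G\<lparr>carrier := H\<rparr>" using subgroup.subgroup_is_group[OF H(1) grp] .
    have "x [^]\<^bsub>G\<lparr>carrier := H\<rparr>\<^esub> order (G\<lparr>carrier := H\<rparr>) = \<one>\<^bsub>G\<lparr>carrier := H\<rparr>\<^esub>"
      using HG.pow_order_eq_1 x by simp
    hence "of_nat (r ^ a) * x = 0" 
      by (subst (asm) pow_additive) (simp_all add: G_def order_def H(2))
    hence "(of_nat (r ^ a) :: 'k) = 0" using x by simp
    hence "p dvd r ^ a" using of_nat_eq_0_iff_char_dvd p_def by blast
    hence "p dvd r" using pprime prime_dvd_power by blast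
    thus False using r rprime pprime by (metis prime_nat_iff pprime prime_gt_1_nat less_irrefl)
  qed
  thus ?thesis by (simp add: p_def)
qed


locale frobq =
  fixes q :: nat
  assumes frob_add: "\<And>x y::'k::field. (x+y)^q = x^q + y^q"
  and frob_bij: "bij (\<lambda>x::'k. x^q)"
begin

abbreviation Fi :: "nat \<Rightarrow> 'k \<Rightarrow> 'k" where "Fi n \<equiv> frobinv q ^^ n"

lemma q_pos: "q > 0"
proof (rule ccontr)
  assume "\<not> q > 0" hence "q = 0" by simp
  hence "(0::'k)^q = 1^q" by simp
  hence "(0::'k) = 1" using frob_bij bij_is_inj injD by (metis (mono_tags, lifting))
  thus False by simp
qed

lemma pow_inj: "(x::'k)^q = y^q \<Longrightarrow> x = y"
  using frob_bij bij_is_inj injD by (metis (mono_tags, lifting))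

lemma Fr_pow [simp]: "frobinv q ((x::'k)^q) = x"
  unfolding frobinv_def using inv_f_f[OF bij_is_inj[OF frob_bij]] by simp

lemma pow_Fr [simp]: "(frobinv q (x::'k))^q = x"
  unfolding frobinv_def using surj_f_inv_f[OF bij_is_surj[OF frob_bij]] by simp

lemma Fr_add: "frobinv q ((x::'k) + y) = frobinv q x + frobinv q y"
  by (rule pow_inj) (simp add: frob_add)

lemma Fr_mult: "frobinv q ((x::'k) * y) = frobinv q x * frobinv q y"
  by (rule pow_inj) (simp add: power_mult_distrib)

lemma Fr_0 [simp]: "frobinv q (0::'k) = 0"
  by (rule pow_inj) (simp add: q_pos)

lemma Fr_1 [simp]: "frobinv q (1::'k) = 1"
  by (rule pow_inj) simp

lemma Fr_minus: "frobinv q (- (x::'k)) = - frobinv q x"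
proof -
  have "frobinv q (- x) + frobinv q x = 0" by (simp flip: Fr_add)
  thus ?thesis by (simp add: eq_neg_iff_add_eq_0)
qed

lemma Fi_add: "Fi n ((x::'k) + y) = Fi n x + Fi n y"
  by (induction n) (simp_all add: Fr_add)
lemma Fi_mult: "Fi n ((x::'k) * y) = Fi n x * Fi n y"
  by (induction n) (simp_all add: Fr_mult)
lemma Fi_0 [simp]: "Fi n (0::'k) = 0"
  by (induction n) simp_all
lemma Fi_1 [simp]: "Fi n (1::'k) = 1"
  by (induction n) simp_all
lemma Fi_minus: "Fi n (- (x::'k)) = - Fi n x"
  by (induction n) (simp_all add: Fr_minus)
lemma Fi_diff: "Fi n ((x::'k) - y) = Fi n x - Fi n y"
  by (simp only: Fi_add Fi_minus diff_conv_add_uminus)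
lemma Fi_sum: "Fi n (sum (f :: _ \<Rightarrow> 'k) A) = (\<Sum>i\<in>A. Fi n (f i))"
  by (induction A rule: infinite_finite_induct) (simp_all add: Fi_add)
lemma Fi_comp: "Fi i (Fi j (x::'k)) = Fi (i + j) x"
  by (simp add: funpow_add)
lemma Fi_Suc: "Fi (Suc n) y = Fi n (frobinv q y)"
  by (simp only: funpow_Suc_right comp_def)
lemma Fi_pow: "Fi n ((x::'k) ^ (q ^ n)) = x"
proof (induction n arbitrary: x)
  case (Suc n)
  have "x ^ (q ^ Suc n) = (x ^ (q ^ n)) ^ q" by (simp only: power_Suc2 power_mult)
  thus ?case using Suc by (simp only: Fi_Suc Fr_pow)
qed simp
lemma pow_Fi: "(Fi n (x::'k)) ^ (q ^ n) = x"
proof (induction n arbitrary: x)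
  case (Suc n)
  have "(Fi (Suc n) x) ^ (q ^ Suc n) = ((Fi n (frobinv q x)) ^ (q ^ n)) ^ q"
    by (simp only: Fi_Suc power_Suc2 power_mult)
  thus ?case using Suc by (simp only: pow_Fr)
qed simp
lemma Fi_eq_0_iff [simp]: "Fi n (x::'k) = 0 \<longleftrightarrow> x = 0"
proof
  assume "Fi n x = 0"
  hence "(Fi n x) ^ (q ^ n) = 0" using q_pos by simp
  thus "x = 0" by (simp only: pow_Fi)
qed simp

lemma assoc_lemma:
  fixes k :: nat
    and f :: "nat \<Rightarrow> nat \<Rightarrow> nat \<Rightarrow> 'a::comm_monoid_add"
  shows "(\<Sum>j=0..k. \<Sum>i=0..j. f i (j - i) (n - j)) =
         (\<Sum>j=0..k. \<Sum>i=0..k - j. f j i (n - j - i))"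
  by (induct k) (simp_all add: Suc_diff_le sum.distrib add.assoc)


lemma sadd_eq: "sadd a b = a + b" by (simp add: sadd_def fun_eq_iff)
lemma szero_eq: "szero = 0" by (simp add: szero_def fun_eq_iff)

lemma smul_apply: "smul q a b n = (\<Sum>i\<le>n. a i * Fi i (b (n - i)))"
  by (simp add: smul_def)

lemma smul_add_left: "smul q (a + b) (c::'k sser) = smul q a c + smul q b c"
  by (simp add: smul_def fun_eq_iff distrib_right sum.distrib)
lemma smul_add_right: "smul q a (b + c::'k sser) = smul q a b + smul q a c"
  by (simp add: smul_def fun_eq_iff Fi_add distrib_left sum.distrib)
lemma smul_zero_left [simp]: "smul q 0 (c::'k sser) = 0"
  by (simp add: smul_def fun_eq_iff)
lemma smul_zero_right [simp]: "smul q a (0::'k sser) = 0"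
  by (simp add: smul_def fun_eq_iff)
lemma smul_zero_left' [simp]: "smul q (\<lambda>_. 0) (c::'k sser) = (\<lambda>_. 0)"
  by (simp add: smul_def fun_eq_iff)
lemma smul_zero_right' [simp]: "smul q a (\<lambda>_. 0::'k) = (\<lambda>_. 0)"
  by (simp add: smul_def fun_eq_iff)
lemma smul_minus_left: "smul q (- a) (c::'k sser) = - smul q a c"
  by (simp add: smul_def fun_eq_iff sum_negf)
lemma smul_minus_right: "smul q a (- c::'k sser) = - smul q a c"
  by (simp add: smul_def fun_eq_iff sum_negf Fi_minus)
lemma smul_diff_left: "smul q (a - b) (c::'k sser) = smul q a c - smul q b c"
  by (simp only: diff_conv_add_uminus smul_add_left smul_minus_left)
lemma smul_diff_right: "smul q a (b - c::'k sser) = smul q a b - smul q a c"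
  by (simp only: diff_conv_add_uminus smul_add_right smul_minus_right)
lemma smul_sum_left: "smul q (sum f A) (c::'k sser) = (\<Sum>i\<in>A. smul q (f i) c)"
proof (induction A rule: infinite_finite_induct)
  case (insert x F)
  thus ?case by (simp only: sum.insert[OF insert(1,2)] smul_add_left)
qed simp_all
lemma smul_sum_right: "smul q c (sum f A :: 'k sser) = (\<Sum>i\<in>A. smul q c (f i))"
proof (induction A rule: infinite_finite_induct)
  case (insert x F)
  thus ?case by (simp only: sum.insert[OF insert(1,2)] smul_add_right)
qed simp_all

lemma smul_assoc: "smul q (smul q a b) (c::'k sser) = smul q a (smul q b c)"
proof (rule ext)
  fix n
  define f where "f x y z = a x * Fi x (b y) * Fi (x + y) (c z)" for x y z
  have "smul q (smul q a b) c n = (\<Sum>j\<le>n. \<Sum>i\<le>j. a i * Fi i (b (j - i)) * Fi j (c (n - j)))"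
    by (simp add: smul_apply sum_distrib_right)
  also have "\<dots> = (\<Sum>j\<le>n. \<Sum>i\<le>j. f i (j - i) (n - j))"
    by (intro sum.cong refl) (auto simp: f_def)
  finally have L: "smul q (smul q a b) c n = (\<Sum>j=0..n. \<Sum>i=0..j. f i (j - i) (n - j))"
    by (simp only: atMost_atLeast0)
  have "smul q a (smul q b c) n = (\<Sum>j\<le>n. a j * Fi j (\<Sum>i\<le>n - j. b i * Fi i (c (n - j - i))))"
    by (simp add: smul_apply)
  also have "\<dots> = (\<Sum>j\<le>n. \<Sum>i\<le>n - j. f j i (n - j - i))"
    by (simp only: Fi_sum Fi_mult Fi_comp sum_distrib_left f_def mult.assoc)
  finally have R: "smul q a (smul q b c) n = (\<Sum>j=0..n. \<Sum>i=0..n - j. f j i (n - j - i))"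
    by (simp only: atMost_atLeast0)
  show "smul q (smul q a b) c n = smul q a (smul q b c) n"
    unfolding L R by (rule assoc_lemma[where f=f and k=n and n=n])
qed

end


context frobq
begin

lemma sone_eq: "sone = spow 0" by (simp add: sone_def spow_def)

lemma smul_spow_left: "smul q (spow v) (b::'k sser) n = (if v \<le> n then Fi v (b (n - v)) else 0)"
proof -
  have "smul q (spow v) b n = (\<Sum>i\<le>n. if i = v then Fi i (b (n - i)) else 0)"
    unfolding smul_apply by (intro sum.cong refl) (auto simp: spow_def)
  thus ?thesis by (simp add: sum.delta)
qed

lemma smul_spow_right: "smul q (a::'k sser) (spow v) n = (if v \<le> n then a (n - v) else 0)"
proof -
  have "smul q a (spow v) n = (\<Sum>i\<le>n. if i = n - v \<and> v \<le> n then a i else 0)"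
    unfolding smul_apply by (intro sum.cong refl) (auto simp: spow_def)
  thus ?thesis by (simp add: sum.delta)
qed

lemma smul_one_left [simp]: "smul q sone (b::'k sser) = b"
  by (rule ext) (simp add: sone_eq smul_spow_left)
lemma smul_one_right [simp]: "smul q (a::'k sser) sone = a"
  by (rule ext) (simp add: sone_eq smul_spow_right)

lemma smul_low_right: "(\<And>i. i \<le> n \<Longrightarrow> b i = 0) \<Longrightarrow> smul q a (b::'k sser) n = 0"
  unfolding smul_apply by (intro sum.neutral) auto
lemma smul_low_left: "(\<And>i. i \<le> n \<Longrightarrow> a i = 0) \<Longrightarrow> smul q a (b::'k sser) n = 0"
  unfolding smul_apply by (intro sum.neutral) auto

lemma div_right: "(\<And>n. n < v \<Longrightarrow> e n = 0) \<Longrightarrow> smul q (\<lambda>n. e (n + v)) (spow v) = (e::'k sser)"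
  by (rule ext) (auto simp: smul_spow_right)

lemma div_left: "(\<And>n. n < v \<Longrightarrow> f n = 0) \<Longrightarrow> smul q (spow v) (\<lambda>n. (f (n + v)) ^ (q ^ v)) = (f::'k sser)"
  by (rule ext) (auto simp: smul_spow_left Fi_pow)

function linv :: "'k sser \<Rightarrow> nat \<Rightarrow> 'k" where
  "linv u n = (sone n - (\<Sum>i\<in>{..<n}. linv u i * Fi i (u (n - i)))) / Fi n (u 0)"
  by auto
termination by (relation "measure snd") auto

declare linv.simps [simp del]

lemma linv_correct: "u 0 \<noteq> 0 \<Longrightarrow> smul q (linv u) (u::'k sser) = sone"
proof (rule ext)
  fix n assume u0: "u 0 \<noteq> 0"
  have "smul q (linv u) u n = (\<Sum>i\<in>{..<n}. linv u i * Fi i (u (n - i))) + linv u n * Fi n (u 0)"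
    unfolding smul_apply by (simp add: lessThan_Suc_atMost[symmetric])
  also have "linv u n * Fi n (u 0) = sone n - (\<Sum>i\<in>{..<n}. linv u i * Fi i (u (n - i)))"
    using u0 by (subst linv.simps) simp
  finally show "smul q (linv u) u n = sone n" by simp
qed

lemma sunitI: assumes u0: "u 0 \<noteq> (0::'k)" shows "sunit q u"
proof -
  define w where "w = linv u"
  have wu: "smul q w u = sone" using linv_correct[of u, OF u0] by (simp add: w_def)
  have "(smul q w u) 0 = w 0 * u 0" by (simp add: smul_apply)
  hence "w 0 * u 0 = 1" using wu by (simp add: sone_def)
  hence w0: "w 0 \<noteq> 0" by auto
  define w' where "w' = linv w"
  have w'w: "smul q w' w = sone" using linv_correct[of w, OF w0] by (simp add: w'_def)
  have "u = smul q (smul q w' w) u" using w'w by simp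
  also have "\<dots> = w'" by (simp add: smul_assoc wu)
  finally have "smul q u w = sone" using w'w by simp
  thus ?thesis using wu unfolding sunit_def by blast
qed

lemma sunit_0: "sunit q (u::'k sser) \<Longrightarrow> u 0 \<noteq> 0"
proof
  assume "sunit q u" "u 0 = 0"
  then obtain v where "smul q u v = sone" unfolding sunit_def by blast
  hence "smul q u v 0 = 1" by (simp add: sone_def)
  thus False using \<open>u 0 = 0\<close> by (simp add: smul_apply)
qed

end

definition lspan :: "nat \<Rightarrow> nat \<Rightarrow> nat \<Rightarrow> 'k::field smat \<Rightarrow> (nat \<Rightarrow> 'k sser) \<Rightarrow> bool" where
  "lspan q m c B w \<longleftrightarrow> (\<exists>a. \<forall>k<c. w k = (\<Sum>r<m. smul q (a r) (B r k)))"

definition INV :: "nat \<Rightarrow> nat \<Rightarrow> nat \<Rightarrow> nat \<Rightarrow> 'k::field smat \<Rightarrow> bool" where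
  "INV q m c s B \<longleftrightarrow> (\<forall>v::nat\<Rightarrow>'k. \<exists>w. lspan q m c B w \<and>
      (\<forall>k<c. \<forall>n<s. w k n = (if n = s - 1 then v k else 0)))"

definition sw :: "nat \<Rightarrow> nat \<Rightarrow> nat \<Rightarrow> nat" where
  "sw i j r = (if r = i then j else if r = j then i else r)"

lemma sw_sw [simp]: "sw i j (sw i j r) = r" by (simp add: sw_def)
lemma sw_lt: "i < m \<Longrightarrow> j < m \<Longrightarrow> r < m \<Longrightarrow> sw i j r < m" by (simp add: sw_def)

lemma sum_sw: assumes "i < m" "j < m" shows "(\<Sum>r<m. f (sw i j r)) = (\<Sum>r<m. f r)"
  by (rule sum.reindex_bij_witness[of _ "sw i j" "sw i j"]) (auto simp: sw_lt assms)

context frobq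
begin

lemma INV_row_add:
  assumes inv: "INV q m c s (B::'k smat)" and ij: "i < m" "j < m" "i \<noteq> j"
  shows "INV q m c s (B(i := (\<lambda>k. sadd (B i k) (smul q x (B j k)))))" (is "INV q m c s ?B'")
  unfolding INV_def
proof
  fix v :: "nat \<Rightarrow> 'k"
  obtain w a where w: "\<forall>k<c. w k = (\<Sum>r<m. smul q (a r) (B r k))"
    and tgt: "\<forall>k<c. \<forall>n<s. w k n = (if n = s - 1 then v k else 0)"
    using inv[unfolded INV_def, rule_format, of "v"] unfolding lspan_def by blast
  define a' where "a' = a(j := a j - smul q (a i) x)"
  have pt: "smul q (a' r) (?B' r k) = smul q (a r) (B r k)
      + (if r = i then smul q (a i) (smul q x (B j k)) else 0)
      - (if r = j then smul q (smul q (a i) x) (B j k) else 0)" for r k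
  proof (cases "r = i")
    case True thus ?thesis using ij by (simp add: a'_def sadd_eq smul_add_right)
  next
    case False
    show ?thesis
    proof (cases "r = j")
      case True thus ?thesis using ij by (simp add: a'_def smul_diff_left)
    next
      case False thus ?thesis using \<open>r \<noteq> i\<close> by (simp add: a'_def)
    qed
  qed
  have eq: "(\<Sum>r<m. smul q (a' r) (?B' r k)) = (\<Sum>r<m. smul q (a r) (B r k))" for k
    unfolding pt using ij by (simp only: sum.distrib sum_subtractf sum.delta finite_lessThan lessThan_iff if_True smul_assoc add_diff_cancel)
  have "lspan q m c ?B' w" unfolding lspan_def
  proof (intro exI[of _ a'] allI impI)
    fix k assume "k < c" thus "w k = (\<Sum>r<m. smul q (a' r) (?B' r k))" using w eq by simp
  qed
  thus "\<exists>w. lspan q m c ?B' w \<and> (\<forall>k<c. \<forall>n<s. w k n = (if n = s - 1 then v k else 0))"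
    using tgt by blast
qed

lemma INV_row_swap:
  assumes inv: "INV q m c s (B::'k smat)" and ij: "i < m" "j < m"
  shows "INV q m c s (B(i := B j, j := B i))" (is "INV q m c s ?B'")
  unfolding INV_def
proof
  fix v :: "nat \<Rightarrow> 'k"
  obtain w a where w: "\<forall>k<c. w k = (\<Sum>r<m. smul q (a r) (B r k))"
    and tgt: "\<forall>k<c. \<forall>n<s. w k n = (if n = s - 1 then v k else 0)"
    using inv[unfolded INV_def, rule_format, of "v"] unfolding lspan_def by blast
  have B': "?B' r = B (sw i j r)" for r by (simp add: sw_def)
  have "(\<Sum>r<m. smul q (a (sw i j r)) (?B' r k)) = (\<Sum>r<m. smul q (a r) (B r k))" for k
    unfolding B' using sum_sw[OF ij, of "\<lambda>r. smul q (a r) (B r k)"] by simp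
  note eq = this
  have "lspan q m c ?B' w" unfolding lspan_def
  proof (intro exI[of _ "\<lambda>r. a (sw i j r)"] allI impI)
    fix k assume "k < c" thus "w k = (\<Sum>r<m. smul q (a (sw i j r)) (?B' r k))" using w eq by simp
  qed
  thus "\<exists>w. lspan q m c ?B' w \<and> (\<forall>k<c. \<forall>n<s. w k n = (if n = s - 1 then v k else 0))"
    using tgt by blast
qed

lemma INV_row_scale:
  assumes inv: "INV q m c s (B::'k smat)" and i: "i < m" and u: "sunit q u"
  shows "INV q m c s (B(i := (\<lambda>k. smul q u (B i k))))" (is "INV q m c s ?B'")
  unfolding INV_def
proof
  fix v :: "nat \<Rightarrow> 'k"
  obtain w a where w: "\<forall>k<c. w k = (\<Sum>r<m. smul q (a r) (B r k))"
    and tgt: "\<forall>k<c. \<forall>n<s. w k n = (if n = s - 1 then v k else 0)"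
    using inv[unfolded INV_def, rule_format, of "v"] unfolding lspan_def by blast
  obtain u' where u': "smul q u' u = sone" using u unfolding sunit_def by blast
  define a' where "a' = a(i := smul q (a i) u')"
  have pt: "smul q (a' r) (?B' r k) = smul q (a r) (B r k)" for r k
  proof (cases "r = i")
    case True
    have "smul q (smul q (a i) u') (smul q u (B i k)) = smul q (a i) (smul q (smul q u' u) (B i k))"
      by (simp only: smul_assoc)
    thus ?thesis using True by (simp add: a'_def u')
  qed (simp add: a'_def)
  have "lspan q m c ?B' w" unfolding lspan_def
  proof (intro exI[of _ a'] allI impI)
    fix k assume "k < c" thus "w k = (\<Sum>r<m. smul q (a' r) (?B' r k))" using w pt by simp
  qed
  thus "\<exists>w. lspan q m c ?B' w \<and> (\<forall>k<c. \<forall>n<s. w k n = (if n = s - 1 then v k else 0))"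
    using tgt by blast
qed


lemma sum_low_coeff:
  assumes "\<forall>l<s. y l = (if l = s - 1 then (b::'k) else 0)" "n < s"
  shows "smul q y x n = (if n = s - 1 then b * Fi (s - 1) (x 0) else 0)"
proof -
  have "smul q y x n = (\<Sum>l\<le>n. if l = s - 1 then b * Fi l (x (n - l)) else 0)"
    unfolding smul_apply using assms by (intro sum.cong refl) auto
  also have "\<dots> = (if s - 1 \<le> n then b * Fi (s - 1) (x (n - (s - 1))) else 0)"
    by (simp add: sum.delta)
  also have "\<dots> = (if n = s - 1 then b * Fi (s - 1) (x 0) else 0)"
    using assms(2) by auto
  finally show ?thesis .
qed

lemma INV_col_add:
  assumes inv: "INV q m c s (B::'k smat)" and ij: "i < c" "j < c" "i \<noteq> j"
  shows "INV q m c s (\<lambda>r. (B r)(i := sadd (B r i) (smul q (B r j) x)))" (is "INV q m c s ?B'")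
  unfolding INV_def
proof
  fix v :: "nat \<Rightarrow> 'k"
  define v' where "v' = v(i := v i - v j * Fi (s - 1) (x 0))"
  obtain w a where w: "\<forall>k<c. w k = (\<Sum>r<m. smul q (a r) (B r k))"
    and tgt: "\<forall>k<c. \<forall>n<s. w k n = (if n = s - 1 then v' k else 0)"
    using inv[unfolded INV_def, rule_format, of "v'"] unfolding lspan_def by blast
  define w' where "w' = w(i := w i + smul q (w j) x)"
  have "lspan q m c ?B' w'" unfolding lspan_def
  proof (intro exI[of _ a] allI impI)
    fix k assume k: "k < c"
    show "w' k = (\<Sum>r<m. smul q (a r) (?B' r k))"
    proof (cases "k = i")
      case True
      have "(\<Sum>r<m. smul q (a r) (?B' r k)) = (\<Sum>r<m. smul q (a r) (B r i)) + (\<Sum>r<m. smul q (smul q (a r) (B r j)) x)"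
        using True by (simp add: sadd_eq smul_add_right smul_assoc sum.distrib)
      also have "\<dots> = w i + smul q (w j) x" using w ij by (simp add: smul_sum_left)
      finally show ?thesis using True by (simp add: w'_def)
    next
      case False thus ?thesis using w k by (simp add: w'_def)
    qed
  qed
  moreover have "\<forall>k<c. \<forall>n<s. w' k n = (if n = s - 1 then v k else 0)"
  proof (intro allI impI)
    fix k n assume k: "k < c" and n: "n < s"
    show "w' k n = (if n = s - 1 then v k else 0)"
    proof (cases "k = i")
      case True
      have wj: "\<forall>l<s. w j l = (if l = s - 1 then v j else 0)" using tgt ij by (simp add: v'_def)
      have "w' k n = w i n + smul q (w j) x n" using True by (simp add: w'_def)
      also have "\<dots> = (if n = s - 1 then v k else 0)"
        using sum_low_coeff[OF wj n] tgt ij n True by (simp add: v'_def)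
      finally show ?thesis .
    next
      case False thus ?thesis using tgt k n by (simp add: w'_def v'_def)
    qed
  qed
  ultimately show "\<exists>w. lspan q m c ?B' w \<and> (\<forall>k<c. \<forall>n<s. w k n = (if n = s - 1 then v k else 0))"
    by blast
qed

lemma INV_col_swap:
  assumes inv: "INV q m c s (B::'k smat)" and ij: "i < c" "j < c"
  shows "INV q m c s (\<lambda>r. (B r)(i := B r j, j := B r i))" (is "INV q m c s ?B'")
  unfolding INV_def
proof
  fix v :: "nat \<Rightarrow> 'k"
  obtain w a where w: "\<forall>k<c. w k = (\<Sum>r<m. smul q (a r) (B r k))"
    and tgt: "\<forall>k<c. \<forall>n<s. w k n = (if n = s - 1 then (\<lambda>k. v (sw i j k)) k else 0)"
    using inv[unfolded INV_def, rule_format, of "(\<lambda>k. v (sw i j k))"] unfolding lspan_def by blast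
  have B': "?B' r k = B r (sw i j k)" for r k by (simp add: sw_def)
  have "lspan q m c ?B' (\<lambda>k. w (sw i j k))" unfolding lspan_def
  proof (intro exI[of _ a] allI impI)
    fix k assume k: "k < c"
    show "w (sw i j k) = (\<Sum>r<m. smul q (a r) (?B' r k))"
      unfolding B' using w sw_lt[OF ij k] by simp
  qed
  moreover have "\<forall>k<c. \<forall>n<s. w (sw i j k) n = (if n = s - 1 then v k else 0)"
    using tgt sw_lt[OF ij] by simp
  ultimately show "\<exists>w. lspan q m c ?B' w \<and> (\<forall>k<c. \<forall>n<s. w k n = (if n = s - 1 then v k else 0))"
    by blast
qed

lemma INV_col_scale:
  assumes inv: "INV q m c s (B::'k smat)" and i: "i < c" and u: "sunit q u"
  shows "INV q m c s (\<lambda>r. (B r)(i := smul q (B r i) u))" (is "INV q m c s ?B'")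
  unfolding INV_def
proof
  fix v :: "nat \<Rightarrow> 'k"
  have u0: "Fi (s - 1) (u 0) \<noteq> 0" using sunit_0[OF u] by simp
  define v' where "v' = v(i := v i / Fi (s - 1) (u 0))"
  obtain w a where w: "\<forall>k<c. w k = (\<Sum>r<m. smul q (a r) (B r k))"
    and tgt: "\<forall>k<c. \<forall>n<s. w k n = (if n = s - 1 then v' k else 0)"
    using inv[unfolded INV_def, rule_format, of "v'"] unfolding lspan_def by blast
  define w' where "w' = w(i := smul q (w i) u)"
  have "lspan q m c ?B' w'" unfolding lspan_def
  proof (intro exI[of _ a] allI impI)
    fix k assume k: "k < c"
    show "w' k = (\<Sum>r<m. smul q (a r) (?B' r k))"
    proof (cases "k = i")
      case True
      have "(\<Sum>r<m. smul q (a r) (?B' r k)) = (\<Sum>r<m. smul q (smul q (a r) (B r i)) u)"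
        using True by (simp add: smul_assoc)
      also have "\<dots> = smul q (w i) u" using w i by (simp add: smul_sum_left)
      finally show ?thesis using True by (simp add: w'_def)
    next
      case False thus ?thesis using w k by (simp add: w'_def)
    qed
  qed
  moreover have "\<forall>k<c. \<forall>n<s. w' k n = (if n = s - 1 then v k else 0)"
  proof (intro allI impI)
    fix k n assume k: "k < c" and n: "n < s"
    show "w' k n = (if n = s - 1 then v k else 0)"
    proof (cases "k = i")
      case True
      have wi: "\<forall>l<s. w i l = (if l = s - 1 then v' i else 0)" using tgt i by simp
      show ?thesis
        using sum_low_coeff[OF wi n, of u] True u0 by (simp add: v'_def w'_def)
    next
      case False thus ?thesis using tgt k n by (simp add: w'_def v'_def)
    qed
  qed
  ultimately show "\<exists>w. lspan q m c ?B' w \<and> (\<forall>k<c. \<forall>n<s. w k n = (if n = s - 1 then v k else 0))"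
    by blast
qed

lemma reach_INV:
  assumes "selem_reach q m c A B" "INV q m c s (A::'k smat)"
  shows "INV q m c s B"
  using assms
proof (induction rule: selem_reach.induct)
  case refl thus ?case .
next
  case (row_add A B i j x)
  have "INV q m c s B" using row_add.IH row_add.prems .
  from this row_add.hyps(2-4) show ?case by (rule INV_row_add)
next
  case (row_swap A B i j)
  have "INV q m c s B" using row_swap.IH row_swap.prems .
  from this row_swap.hyps(2-3) show ?case by (rule INV_row_swap)
next
  case (row_scale A B i u)
  have "INV q m c s B" using row_scale.IH row_scale.prems .
  from this row_scale.hyps(2-3) show ?case by (rule INV_row_scale)
next
  case (col_add A B i j x)
  have "INV q m c s B" using col_add.IH col_add.prems .
  from this col_add.hyps(2-4) show ?case by (rule INV_col_add)
next
  case (col_swap A B i j)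
  have "INV q m c s B" using col_swap.IH col_swap.prems .
  from this col_swap.hyps(2-3) show ?case by (rule INV_col_swap)
next
  case (col_scale A B i u)
  have "INV q m c s B" using col_scale.IH col_scale.prems .
  from this col_scale.hyps(2-3) show ?case by (rule INV_col_scale)
qed

lemma reach_trans:
  assumes "selem_reach q m c B C" "selem_reach q m c A B"
  shows "selem_reach q m c A C"
  using assms
proof (induction rule: selem_reach.induct)
  case refl thus ?case .
next
  case row_add thus ?case by (intro selem_reach.row_add) auto
next
  case row_swap thus ?case by (intro selem_reach.row_swap) auto
next
  case row_scale thus ?case by (intro selem_reach.row_scale) auto
next
  case col_add thus ?case by (intro selem_reach.col_add) auto
next
  case col_swap thus ?case by (intro selem_reach.col_swap) auto
next
  case col_scale thus ?case by (intro selem_reach.col_scale) auto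
qed

end

lemma iter_row_add:
  assumes "t < m"
  shows "selem_reach q m c B (\<lambda>r. if t < r \<and> r < m then (\<lambda>k. sadd (B r k) (smul q (x r) (B t k))) else B r)"
proof -
  have "selem_reach q m c B (\<lambda>r. if t < r \<and> r < K \<and> r < m then (\<lambda>k. sadd (B r k) (smul q (x r) (B t k))) else B r)" for K
  proof (induction K)
    case 0
    have "(\<lambda>r. if t < r \<and> r < 0 \<and> r < m then (\<lambda>k. sadd (B r k) (smul q (x r) (B t k))) else B r) = B"
      by (rule ext) simp
    thus ?case using selem_reach.refl by metis
  next
    case (Suc K)
    let ?C = "\<lambda>r. if t < r \<and> r < K \<and> r < m then (\<lambda>k. sadd (B r k) (smul q (x r) (B t k))) else B r"
    let ?D = "\<lambda>r. if t < r \<and> r < Suc K \<and> r < m then (\<lambda>k. sadd (B r k) (smul q (x r) (B t k))) else B r"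
    show ?case
    proof (cases "t < K \<and> K < m")
      case True
      have "selem_reach q m c B (?C(K := (\<lambda>k. sadd (?C K k) (smul q (x K) (?C t k)))))"
        by (rule selem_reach.row_add[OF Suc]) (use True assms in auto)
      moreover have "?C(K := (\<lambda>k. sadd (?C K k) (smul q (x K) (?C t k)))) = ?D"
        using True by (intro ext) (auto simp: less_Suc_eq)
      ultimately show ?thesis by simp
    next
      case False
      have "?C r = ?D r" for r
      proof (cases "r = K")
        case True thus ?thesis using False by auto
      qed (auto simp: less_Suc_eq)
      hence "?C = ?D" by (rule ext)
      thus ?thesis using Suc by simp
    qed
  qed
  from this[of m] show ?thesis by simp
qed

lemma iter_col_add:
  assumes "t < c"
  shows "selem_reach q m c B (\<lambda>r k. if t < k \<and> k < c then sadd (B r k) (smul q (B r t) (y k)) else B r k)"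
proof -
  have "selem_reach q m c B (\<lambda>r k. if t < k \<and> k < K \<and> k < c then sadd (B r k) (smul q (B r t) (y k)) else B r k)" for K
  proof (induction K)
    case 0
    have "(\<lambda>r k. if t < k \<and> k < 0 \<and> k < c then sadd (B r k) (smul q (B r t) (y k)) else B r k) = B"
      by (intro ext) simp
    thus ?case using selem_reach.refl by metis
  next
    case (Suc K)
    let ?C = "\<lambda>r k. if t < k \<and> k < K \<and> k < c then sadd (B r k) (smul q (B r t) (y k)) else B r k"
    let ?D = "\<lambda>r k. if t < k \<and> k < Suc K \<and> k < c then sadd (B r k) (smul q (B r t) (y k)) else B r k"
    show ?case
    proof (cases "t < K \<and> K < c")
      case True
      have "selem_reach q m c B (\<lambda>r. (?C r)(K := sadd (?C r K) (smul q (?C r t) (y K))))"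
        by (rule selem_reach.col_add[OF Suc]) (use True assms in auto)
      moreover have "(\<lambda>r. (?C r)(K := sadd (?C r K) (smul q (?C r t) (y K)))) = ?D"
        using True by (intro ext) (auto simp: less_Suc_eq)
      ultimately show ?thesis by simp
    next
      case False
      have eqCD: "?C r k = ?D r k" for r k
      proof (cases "k = K")
        case True thus ?thesis using False by auto
      qed (auto simp: less_Suc_eq)
      have "?C = ?D"
      proof (rule ext, rule ext)
        fix r k show "?C r k = ?D r k" by (rule eqCD)
      qed
      thus ?thesis using Suc by simp
    qed
  qed
  from this[of c] show ?thesis by simp
qed

lemma sum_app: "(sum f A :: 'a \<Rightarrow> 'b::comm_monoid_add) x = (\<Sum>a\<in>A. f a x)"
  by (induction A rule: infinite_finite_induct) simp_all


definition diagup :: "nat \<Rightarrow> nat \<Rightarrow> nat \<Rightarrow> nat \<Rightarrow> 'k::field smat \<Rightarrow> (nat \<Rightarrow> nat) \<Rightarrow> bool" where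
  "diagup m c s t B \<nu> \<longleftrightarrow> (\<forall>i<t. B i i = spow (\<nu> i) \<and> \<nu> i < s \<and> (\<forall>j<c. j \<noteq> i \<longrightarrow> B i j = 0)
      \<and> (\<forall>r<m. r \<noteq> i \<longrightarrow> B r i = 0))"

context frobq
begin

lemma pivot:
  assumes s1: "1 \<le> s" and inv: "INV q m c s (B::'k smat)" and t: "t < c" and dg: "diagup m c s t B \<nu>"
  shows "\<exists>v0 i0 j0. v0 < s \<and> t \<le> i0 \<and> i0 < m \<and> t \<le> j0 \<and> j0 < c \<and> B i0 j0 v0 \<noteq> 0 \<and>
     (\<forall>i j n. t \<le> i \<longrightarrow> i < m \<longrightarrow> t \<le> j \<longrightarrow> j < c \<longrightarrow> n < v0 \<longrightarrow> B i j n = 0)"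
proof -
  define P where "P n \<longleftrightarrow> (\<exists>i j. t \<le> i \<and> i < m \<and> t \<le> j \<and> j < c \<and> B i j n \<noteq> 0)" for n
  obtain w a where w: "\<forall>k<c. w k = (\<Sum>r<m. smul q (a r) (B r k))"
    and tgt: "\<forall>k<c. \<forall>n<s. w k n = (if n = s - 1 then (\<lambda>k. if k = t then 1 else 0) k else 0)"
    using inv[unfolded INV_def, rule_format, of "\<lambda>k. if k = t then 1 else 0"] unfolding lspan_def by blast
  have ex: "\<exists>n. n < s \<and> P n"
  proof (rule ccontr)
    assume no: "\<not> (\<exists>n. n < s \<and> P n)"
    have "w t (s - 1) = 1" using tgt t s1 by simp
    moreover have "w t (s - 1) = 0"
    proof -
      have "w t (s - 1) = (\<Sum>r<m. smul q (a r) (B r t) (s - 1))" using w t by (simp add: sum_app)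
      also have "\<dots> = 0"
      proof (rule sum.neutral, rule ballI)
        fix r assume r: "r \<in> {..<m}"
        show "smul q (a r) (B r t) (s - 1) = 0"
        proof (cases "r < t")
          case True
          hence "B r t = 0" using dg t r unfolding diagup_def by auto
          thus ?thesis by simp
        next
          case False
          show ?thesis
          proof (rule smul_low_right)
            fix i assume "i \<le> s - 1"
            hence "i < s" using s1 by simp
            thus "B r t i = 0" using no False r t unfolding P_def by auto
          qed
        qed
      qed
      finally show ?thesis .
    qed
    ultimately show False by simp
  qed
  define v0 where "v0 = (LEAST n. P n)"
  from ex obtain n where n: "n < s" "P n" by blast
  have Pv0: "P v0" unfolding v0_def using n(2) by (rule LeastI)
  have "v0 \<le> n" unfolding v0_def using n(2) by (rule Least_le)
  hence "v0 < s" using n(1) by simp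
  moreover have "\<forall>i j n. t \<le> i \<longrightarrow> i < m \<longrightarrow> t \<le> j \<longrightarrow> j < c \<longrightarrow> n < v0 \<longrightarrow> B i j n = 0"
  proof (intro allI impI)
    fix i j n assume "t \<le> i" "i < m" "t \<le> j" "j < c" "n < v0"
    hence "\<not> P n" unfolding v0_def using not_less_Least by blast
    thus "B i j n = 0" using \<open>t \<le> i\<close> \<open>i < m\<close> \<open>t \<le> j\<close> \<open>j < c\<close> unfolding P_def by blast
  qed
  ultimately show ?thesis using Pv0 unfolding P_def by blast
qed


lemma step:
  assumes s1: "1 \<le> s" and inv: "INV q m c s (B::'k smat)" and t: "t < c" and cm: "c \<le> m"
    and dg: "diagup m c s t B \<nu>"
  shows "\<exists>C v. selem_reach q m c B C \<and> INV q m c s C \<and> diagup m c s (Suc t) C (\<nu>(t := v))"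
proof -
  obtain v0 i0 j0 where v0s: "v0 < s" and i0: "t \<le> i0" "i0 < m" and j0: "t \<le> j0" "j0 < c"
    and piv: "B i0 j0 v0 \<noteq> 0"
    and low: "\<And>i j n. t \<le> i \<Longrightarrow> i < m \<Longrightarrow> t \<le> j \<Longrightarrow> j < c \<Longrightarrow> n < v0 \<Longrightarrow> B i j n = 0"
    using pivot[OF s1 inv t dg] by blast
  have tm: "t < m" using t cm by simp
  define B1 where "B1 = B(t := B i0, i0 := B t)"
  have r1: "selem_reach q m c B B1" unfolding B1_def
    by (rule selem_reach.row_swap[OF selem_reach.refl tm i0(2)])
  define B2 where "B2 = (\<lambda>r. (B1 r)(t := B1 r j0, j0 := B1 r t))"
  have r2: "selem_reach q m c B B2" unfolding B2_def
    by (rule selem_reach.col_swap[OF r1 t j0(2)])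
  have B2_eq: "B2 r k = B (sw t i0 r) (sw t j0 k)" for r k
    by (simp add: B2_def B1_def sw_def)
  have swr_lt: "r < t \<Longrightarrow> sw t i0 r = r" for r using i0 by (simp add: sw_def)
  have swc_lt: "k < t \<Longrightarrow> sw t j0 k = k" for k using j0 by (simp add: sw_def)
  have swr_ge: "t \<le> r \<Longrightarrow> r < m \<Longrightarrow> t \<le> sw t i0 r \<and> sw t i0 r < m" for r
    using i0 tm by (auto simp: sw_def)
  have swc_ge: "t \<le> k \<Longrightarrow> k < c \<Longrightarrow> t \<le> sw t j0 k \<and> sw t j0 k < c" for k
    using j0 t by (auto simp: sw_def)
  have B2tt: "B2 t t = B i0 j0" by (simp add: B2_eq sw_def)
  have low2: "B2 r k n = 0" if "t \<le> r" "r < m" "t \<le> k" "k < c" "n < v0" for r k n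
    unfolding B2_eq using low swr_ge swc_ge that by blast
  have dgB: "\<And>i j. i < t \<Longrightarrow> j < c \<Longrightarrow> j \<noteq> i \<Longrightarrow> B i j = 0"
    and dgB': "\<And>i r. i < t \<Longrightarrow> r < m \<Longrightarrow> r \<noteq> i \<Longrightarrow> B r i = 0"
    and dgBd: "\<And>i. i < t \<Longrightarrow> B i i = spow (\<nu> i) \<and> \<nu> i < s"
    using dg unfolding diagup_def by auto
  have sw_ne: "sw a b x \<noteq> y" if "x \<noteq> y" "sw a b y = y" for a b x y :: nat
    using that sw_sw by metis
  have sw_lt_m: "r < m \<Longrightarrow> sw t i0 r < m" for r using sw_lt[OF tm i0(2)] .
  have sw_lt_c: "k < c \<Longrightarrow> sw t j0 k < c" for k using sw_lt[OF t j0(2)] .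
  have dg2: "B2 i j = 0" if "i < t" "j < c" "j \<noteq> i" for i j
  proof -
    have "sw t j0 j \<noteq> i" using sw_ne[OF that(3) swc_lt[OF that(1)]] .
    thus ?thesis unfolding B2_eq swr_lt[OF that(1)] using dgB that sw_lt_c by blast
  qed
  have dg2': "B2 r i = 0" if "i < t" "r < m" "r \<noteq> i" for i r
  proof -
    have "sw t i0 r \<noteq> i" using sw_ne[OF that(3) swr_lt[OF that(1)]] .
    thus ?thesis unfolding B2_eq swc_lt[OF that(1)] using dgB' that sw_lt_m by blast
  qed
  have dg2d: "B2 i i = B i i" if "i < t" for i unfolding B2_eq using swr_lt swc_lt that by simp
  define u where "u = (\<lambda>n. B2 t t (n + v0))"
  have u0: "u 0 \<noteq> 0" using piv B2tt by (simp add: u_def)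
  have B2tt': "smul q u (spow v0) = B2 t t" unfolding u_def
    by (rule div_right) (use low2 tm t in auto)
  define u' where "u' = linv u"
  have u'u: "smul q u' u = sone" unfolding u'_def by (rule linv_correct[of u, OF u0])
  have "smul q u' u 0 = 1" using u'u by (simp add: sone_def)
  hence "u' 0 \<noteq> 0" by (auto simp: smul_apply)
  hence su': "sunit q u'" by (rule sunitI)
  define B3 where "B3 = B2(t := (\<lambda>k. smul q u' (B2 t k)))"
  have r3: "selem_reach q m c B B3" unfolding B3_def by (rule selem_reach.row_scale[OF r2 tm su'])
  have B3tt: "B3 t t = spow v0"
  proof -
    have "B3 t t = smul q u' (smul q u (spow v0))" by (simp add: B3_def B2tt')
    also have "\<dots> = spow v0" by (simp add: smul_assoc[symmetric] u'u)
    finally show ?thesis .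
  qed
  have low3: "B3 t k n = 0" if "t \<le> k" "k < c" "n < v0" for k n
    unfolding B3_def by simp (rule smul_low_right, use low2 tm that in auto)
  have B3tk: "B3 t k = 0" if "k < t" for k
    using dg2'[OF that tm] that by (simp add: B3_def)
  have B3r: "r \<noteq> t \<Longrightarrow> B3 r = B2 r" for r by (simp add: B3_def)
  define cc where "cc r = (\<lambda>n. B3 r t (n + v0))" for r
  define B4 where "B4 = (\<lambda>r. if t < r \<and> r < m then (\<lambda>k. sadd (B3 r k) (smul q ((\<lambda>r. - cc r) r) (B3 t k))) else B3 r)"
  have r4: "selem_reach q m c B B4" unfolding B4_def
    by (rule reach_trans[OF iter_row_add[OF tm] r3])
  have B4rt: "B4 r t = 0" if "t < r" "r < m" for r
  proof -
    have "smul q (cc r) (spow v0) = B3 r t" unfolding cc_def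
      by (rule div_right) (use that low2 B3r tm t in auto)
    hence "B4 r t = B3 r t + smul q (- cc r) (spow v0)" using that by (simp add: B4_def B3tt sadd_eq)
    also have "\<dots> = 0" using \<open>smul q (cc r) (spow v0) = B3 r t\<close> by (simp add: smul_minus_left)
    finally show ?thesis .
  qed
  have B4t: "B4 t = B3 t" by (simp add: B4_def)
  have B4lo: "r < t \<Longrightarrow> B4 r = B2 r" for r by (simp add: B4_def B3r)
  have B4hi: "B4 r k = B2 r k" if "t < r" "r < m" "k < t" for r k
    using that B3tk[OF that(3)] B3r[of r] by (simp add: B4_def sadd_eq)
  define e where "e k = (\<lambda>n. (B4 t k (n + v0)) ^ (q ^ v0))" for k
  define B5 where "B5 = (\<lambda>r k. if t < k \<and> k < c then sadd (B4 r k) (smul q (B4 r t) ((\<lambda>k. - e k) k)) else B4 r k)"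
  have r5: "selem_reach q m c B B5" unfolding B5_def
    by (rule reach_trans[OF iter_col_add[OF t] r4])
  have inv5: "INV q m c s B5" by (rule reach_INV[OF r5 inv])
  have F1: "B4 r t = 0" if "r < m" "r \<noteq> t" for r
  proof (cases "r < t")
    case True thus ?thesis using B4lo dg2[OF True t] that by simp
  next
    case False thus ?thesis using B4rt that by simp
  qed
  have F2: "B5 r k = B4 r k" if "r < m" "r \<noteq> t" for r k
    using F1[OF that] by (simp add: B5_def sadd_eq)
  have F3: "B5 t k = 0" if "t < k" "k < c" for k
  proof -
    have "smul q (spow v0) (e k) = B4 t k" unfolding e_def
      by (rule div_left) (use that low3 B4t in auto)
    thus ?thesis using that by (simp add: B5_def B3tt B4t sadd_eq smul_minus_right)
  qed
  have F4: "B5 r k = B4 r k" if "\<not> (t < k \<and> k < c)" for r k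
    using that unfolding B5_def by auto
  have "diagup m c s (Suc t) B5 (\<nu>(t := v0))"
    unfolding diagup_def
  proof (intro allI impI)
    fix i assume "i < Suc t"
    show "B5 i i = spow ((\<nu>(t := v0)) i) \<and> (\<nu>(t := v0)) i < s \<and> (\<forall>j<c. j \<noteq> i \<longrightarrow> B5 i j = 0)
      \<and> (\<forall>r<m. r \<noteq> i \<longrightarrow> B5 r i = 0)"
    proof (cases "i < t")
      case True
      have im: "i < m" using True tm by simp
      have a: "B5 i i = spow (\<nu> i)" using F4[of i i] True B4lo dg2d dgBd by simp
      have b: "\<nu> i < s" using dgBd True by simp
      have c: "B5 i j = 0" if "j < c" "j \<noteq> i" for j
        using F2[OF im] True B4lo dg2 that by simp
      have d: "B5 r i = 0" if "r < m" "r \<noteq> i" for r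
      proof -
        have "B5 r i = B4 r i" using F4 True by simp
        moreover have "B4 r i = 0"
        proof (cases "r = t")
          case True thus ?thesis using B4t B3tk \<open>i < t\<close> by simp
        next
          case False
          show ?thesis
          proof (cases "r < t")
            case True thus ?thesis using B4lo dg2' \<open>i < t\<close> that by simp
          next
            case False
            hence "t < r" using \<open>r \<noteq> t\<close> by simp
            thus ?thesis using B4hi \<open>i < t\<close> that dg2' by simp
          qed
        qed
        ultimately show ?thesis by simp
      qed
      show ?thesis using a b c d True by auto
    next
      case False
      hence it: "i = t" using \<open>i < Suc t\<close> by simp
      have a: "B5 t t = spow v0" using F4[of t t] B4t B3tt by simp
      have c: "B5 t j = 0" if "j < c" "j \<noteq> t" for j
      proof (cases "t < j")
        case True thus ?thesis using F3 that by simp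
      next
        case False
        hence "j < t" using that by simp
        thus ?thesis using F4[of j t] B4t B3tk by simp
      qed
      have d: "B5 r t = 0" if "r < m" "r \<noteq> t" for r
        using F4[of t r] F1 that by simp
      show ?thesis using a c d v0s it by auto
    qed
  qed
  thus ?thesis using r5 inv5 by blast
qed

lemma smith:
  assumes s1: "1 \<le> s" and cm: "c \<le> m"
  shows "INV q m c s (B::'k smat) \<Longrightarrow> t \<le> c \<Longrightarrow> diagup m c s t B \<nu> \<Longrightarrow>
    \<exists>C \<nu>'. selem_reach q m c B C \<and> (\<forall>i<m. \<forall>j<c. C i j = (if i = j then spow (\<nu>' i) else 0))
       \<and> (\<forall>i<c. \<nu>' i < s)"
proof (induction "c - t" arbitrary: B t \<nu>)
  case 0
  hence tc: "t = c" by simp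
  have "\<forall>i<m. \<forall>j<c. B i j = (if i = j then spow (\<nu> i) else 0)"
  proof (intro allI impI)
    fix i j assume "i < m" "j < c"
    show "B i j = (if i = j then spow (\<nu> i) else 0)"
    proof (cases "i = j")
      case True thus ?thesis using 0(4) \<open>j < c\<close> tc unfolding diagup_def by auto
    next
      case False
      show ?thesis
      proof (cases "i < c")
        case True thus ?thesis using 0(4) False \<open>j < c\<close> tc unfolding diagup_def by auto
      next
        case nc: False
        thus ?thesis using 0(4) False \<open>j < c\<close> \<open>i < m\<close> tc unfolding diagup_def by auto
      qed
    qed
  qed
  moreover have "\<forall>i<c. \<nu> i < s" using 0(4) tc unfolding diagup_def by auto
  ultimately show ?case using selem_reach.refl by blast
next
  case (Suc x)
  have t: "t < c" using Suc(2) by simp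
  obtain C v where C: "selem_reach q m c B C" "INV q m c s C" "diagup m c s (Suc t) C (\<nu>(t := v))"
    using step[OF s1 Suc(3) t cm Suc(5)] by blast
  have "x = c - Suc t" using Suc(2) by simp
  from Suc(1)[OF this C(2) _ C(3)] t obtain D \<nu>' where
    D: "selem_reach q m c C D" "\<forall>i<m. \<forall>j<c. D i j = (if i = j then spow (\<nu>' i) else 0)" "\<forall>i<c. \<nu>' i < s"
    by auto
  show ?case using reach_trans[OF D(1) C(1)] D(2,3) by blast
qed

end

definition gsh :: "nat \<Rightarrow> nat \<Rightarrow> nat \<Rightarrow> 'k::field poly \<Rightarrow> 'k sser" where
  "gsh q T S f = (\<lambda>n. if n \<le> S then (frobinv q ^^ T) (Polynomial.coeff f (S - n)) else 0)"

definition pt :: "'k::field \<Rightarrow> nat \<Rightarrow> 'k sser" where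
  "pt x p = (\<lambda>n. if n = p then x else 0)"

lemma sigma_shift_gsh: "sigma_shift q s f = gsh q s s f"
  by (simp add: sigma_shift_def gsh_def)

context frobq
begin

lemma tmult_ext:
  assumes "degree f \<le> A" "degree g \<le> B"
  shows "tmult q f (g::'k poly) = (\<Sum>i\<le>A. \<Sum>j\<le>B. Polynomial.monom (Polynomial.coeff f i * (Polynomial.coeff g j) ^ (q ^ i)) (i + j))"
proof -
  have z: "0 < q ^ i" for i using q_pos by simp
  have "tmult q f g = (\<Sum>i\<le>degree f. \<Sum>j\<le>B. Polynomial.monom (Polynomial.coeff f i * (Polynomial.coeff g j) ^ (q ^ i)) (i + j))"
    unfolding tmult_def
    by (intro sum.cong refl sum.mono_neutral_left) (use assms z in \<open>auto simp: coeff_eq_0\<close>)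
  also have "\<dots> = (\<Sum>i\<le>A. \<Sum>j\<le>B. Polynomial.monom (Polynomial.coeff f i * (Polynomial.coeff g j) ^ (q ^ i)) (i + j))"
    by (intro sum.mono_neutral_left) (use assms in \<open>auto simp: coeff_eq_0\<close>)
  finally show ?thesis .
qed

lemma tmult_add_left: "tmult q (f + h) (g::'k poly) = tmult q f g + tmult q h g"
proof -
  define A where "A = max (degree f) (degree h)"
  have "degree (f + h) \<le> A" unfolding A_def by (rule degree_add_le) auto
  hence "tmult q (f + h) g = (\<Sum>i\<le>A. \<Sum>j\<le>degree g. Polynomial.monom ((Polynomial.coeff f i + Polynomial.coeff h i) * (Polynomial.coeff g j) ^ (q ^ i)) (i + j))"
    using tmult_ext[OF _ order_refl, of "f + h" A g] by simp
  also have "\<dots> = (\<Sum>i\<le>A. \<Sum>j\<le>degree g. Polynomial.monom (Polynomial.coeff f i * (Polynomial.coeff g j) ^ (q ^ i)) (i + j))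
      + (\<Sum>i\<le>A. \<Sum>j\<le>degree g. Polynomial.monom (Polynomial.coeff h i * (Polynomial.coeff g j) ^ (q ^ i)) (i + j))"
    by (simp add: distrib_right add_monom[symmetric] sum.distrib)
  also have "\<dots> = tmult q f g + tmult q h g"
    by (subst (1 2) tmult_ext[where A=A and B="degree g"]) (auto simp: A_def)
  finally show ?thesis .
qed

lemma tmult_zero_left [simp]: "tmult q 0 (g::'k poly) = 0"
  by (simp add: tmult_def)

lemma tmult_sum_left: "tmult q (sum f S) (g::'k poly) = (\<Sum>x\<in>S. tmult q (f x) g)"
  by (induction S rule: infinite_finite_induct) (simp_all add: tmult_add_left)

lemma smult_sum_right: "Polynomial.smult c (sum f S) = (\<Sum>x\<in>S. Polynomial.smult c (f x :: 'a::comm_semiring_0 poly))"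
  by (induction S rule: infinite_finite_induct) (simp_all add: smult_add_right)

lemma tmult_smult_left: "tmult q (Polynomial.smult c f) (g::'k poly) = Polynomial.smult c (tmult q f g)"
proof (cases "c = 0")
  case False
  thus ?thesis
    by (simp add: tmult_def smult_sum_right smult_monom mult.assoc)
qed simp

lemma degree_tmult: "degree (tmult q f (g::'k poly)) \<le> degree f + degree g"
  unfolding tmult_def
  by (intro degree_sum_le finite_atMost) (auto intro: order.trans[OF degree_monom_le])

lemma gsh_add: "gsh q T S (f + g) = gsh q T S f + gsh q T S (g::'k poly)"
  by (rule ext) (simp add: gsh_def Fi_add)

lemma gsh_zero [simp]: "gsh q T S (0::'k poly) = 0"
  by (rule ext) (simp add: gsh_def)

lemma gsh_sum: "gsh q T S (sum f A) = (\<Sum>x\<in>A. gsh q T S (f x :: 'k poly))"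
proof (induction A rule: infinite_finite_induct)
  case (insert x F)
  thus ?case by (simp only: sum.insert[OF insert(1,2)] gsh_add)
qed simp_all

lemma gsh_monom: "i \<le> S \<Longrightarrow> gsh q T S (Polynomial.monom (a::'k) i) = pt (Fi T a) (S - i)"
  by (rule ext) (auto simp: gsh_def pt_def coeff_monom)

lemma smul_pt: "smul q (pt x p) (pt (y::'k) r) = pt (x * Fi p y) (p + r)"
proof (rule ext)
  fix n
  have "smul q (pt x p) (pt y r) n = (\<Sum>l\<le>n. if l = p then x * Fi l (pt y r (n - l)) else 0)"
    unfolding smul_apply by (intro sum.cong refl) (auto simp: pt_def)
  also have "\<dots> = (if p \<le> n then x * Fi p (pt y r (n - p)) else 0)" by (simp add: sum.delta)
  also have "\<dots> = pt (x * Fi p y) (p + r) n" by (auto simp: pt_def)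
  finally show "smul q (pt x p) (pt y r) n = pt (x * Fi p y) (p + r) n" .
qed

lemma Fi_pow_le: "i \<le> T \<Longrightarrow> Fi T ((y::'k) ^ (q ^ i)) = Fi (T - i) y"
proof -
  assume "i \<le> T"
  hence "Fi T (y ^ (q ^ i)) = Fi (T - i) (Fi i (y ^ (q ^ i)))" by (simp add: Fi_comp)
  thus ?thesis by (simp add: Fi_pow)
qed

lemma gsh_prod_monom:
  assumes "i \<le> S1" "j \<le> S2" "S1 \<le> T1"
  shows "smul q (gsh q T1 S1 (Polynomial.monom (a::'k) i)) (gsh q (T1 - S1) S2 (Polynomial.monom b j))
     = gsh q T1 (S1 + S2) (Polynomial.monom (a * b ^ (q ^ i)) (i + j))"
proof -
  have "smul q (gsh q T1 S1 (Polynomial.monom a i)) (gsh q (T1 - S1) S2 (Polynomial.monom b j))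
      = pt (Fi T1 a * Fi (S1 - i) (Fi (T1 - S1) b)) (S1 - i + (S2 - j))"
    using assms by (simp add: gsh_monom smul_pt)
  also have "Fi (S1 - i) (Fi (T1 - S1) b) = Fi T1 (b ^ (q ^ i))"
    using assms by (simp add: Fi_comp Fi_pow_le)
  also have "S1 - i + (S2 - j) = S1 + S2 - (i + j)" using assms by simp
  finally show ?thesis using assms by (simp add: gsh_monom Fi_mult)
qed

lemma gsh_prod:
  assumes "degree f \<le> S1" "degree g \<le> S2" "S1 \<le> T1"
  shows "smul q (gsh q T1 S1 f) (gsh q (T1 - S1) S2 g) = gsh q T1 (S1 + S2) (tmult q f (g::'k poly))"
proof -
  have "smul q (gsh q T1 S1 f) (gsh q (T1 - S1) S2 g)
    = smul q (gsh q T1 S1 (\<Sum>i\<le>S1. Polynomial.monom (Polynomial.coeff f i) i)) (gsh q (T1 - S1) S2 (\<Sum>j\<le>S2. Polynomial.monom (Polynomial.coeff g j) j))"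
    using assms by (simp add: poly_as_sum_of_monoms')
  also have "\<dots> = (\<Sum>i\<le>S1. \<Sum>j\<le>S2. smul q (gsh q T1 S1 (Polynomial.monom (Polynomial.coeff f i) i)) (gsh q (T1 - S1) S2 (Polynomial.monom (Polynomial.coeff g j) j)))"
    by (simp add: gsh_sum smul_sum_left smul_sum_right sum.swap[where A="{..S2}"])
  also have "\<dots> = (\<Sum>i\<le>S1. \<Sum>j\<le>S2. gsh q T1 (S1 + S2) (Polynomial.monom (Polynomial.coeff f i * (Polynomial.coeff g j) ^ (q ^ i)) (i + j)))"
    using assms by (intro sum.cong refl gsh_prod_monom) auto
  also have "\<dots> = gsh q T1 (S1 + S2) (tmult q f g)"
    using assms by (simp add: gsh_sum tmult_ext[where A=S1 and B=S2])
  finally show ?thesis .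
qed

end

lemma sum_divmod:
  fixes n d :: nat shows "(\<Sum>r<n * d. f (r div d) (r mod d)) = (\<Sum>k<n. \<Sum>i<d. (f k i :: 'a::comm_monoid_add))"
proof (induction n)
  case (Suc n)
  have split: "{..<Suc n * d} = {..<n * d} \<union> {n * d..<n * d + d}" by auto
  have "(\<Sum>r\<in>{n * d..<n * d + d}. f (r div d) (r mod d)) = (\<Sum>i<d. f n i)"
  proof (rule sum.reindex_bij_witness[of _ "\<lambda>i. n * d + i" "\<lambda>r. r - n * d"])
    fix r assume r: "r \<in> {n * d..<n * d + d}"
    thus "n * d + (r - n * d) = r" "r - n * d \<in> {..<d}" by auto
    obtain i where i: "r = n * d + i" "i < d" using r by (metis add_less_cancel_left atLeastLessThan_iff le_add_diff_inverse)
    have "(n * d + i) div d = n" "(n * d + i) mod d = i" using i by auto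
    thus "f n (r - n * d) = f (r div d) (r mod d)" using i by simp
  next
    fix i assume i: "i \<in> {..<d}"
    thus "n * d + i - n * d = i" "n * d + i \<in> {n * d..<n * d + d}" by auto
  qed
  moreover have "(\<Sum>r<Suc n * d. f (r div d) (r mod d)) = (\<Sum>r<n * d. f (r div d) (r mod d))
      + (\<Sum>r\<in>{n * d..<n * d + d}. f (r div d) (r mod d))"
    unfolding split by (rule sum.union_disjoint) auto
  ultimately show ?case using Suc by simp
qed simp

lemma sum_restrict_lt:
  fixes N n :: nat
  assumes "N \<le> n"
  shows "(\<Sum>k<n. if k < N then Y k else 0) = (\<Sum>k<N. (Y k :: 'a::comm_monoid_add))"
proof -
  have "(\<Sum>k<n. if k < N then Y k else 0) = (\<Sum>k<N. if k < N then Y k else 0)"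
    by (rule sum.mono_neutral_right) (use assms in auto)
  thus ?thesis by simp
qed

context frobq
begin

lemma tmult_if0: "tmult q (if P then f else 0) (g::'k poly) = (if P then tmult q f g else 0)"
  by simp

lemma poly_identity:
  fixes gens :: "(nat \<Rightarrow> 'k poly) list" and N :: "nat \<Rightarrow> nat" and cc :: "nat \<Rightarrow> nat \<Rightarrow> nat \<Rightarrow> 'k"
    and c :: "nat \<Rightarrow> 'k"
  assumes NC: "\<And>j l. j < d \<Longrightarrow> l < d \<Longrightarrow> (if l = j then Polynomial.monom 1 L else 0) =
      (\<Sum>g<length gens. \<Sum>k<N j. tmotive_scal (cc j g k) (trowmul q d (gens ! g) (tmatpow q d D k)) l)"
    and Nn: "\<And>j. j < d \<Longrightarrow> N j \<le> n"
    and l: "l < d"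
  shows "Polynomial.monom (c l) L = (\<Sum>k<n. \<Sum>i<d. tmult q (\<Sum>j<d. \<Sum>g<length gens.
      if k < N j then Polynomial.smult (c j * cc j g k) ((gens ! g) i) else 0) (tmatpow q d D k i l))"
proof -
  let ?G = "length gens"
  define T where "T j g k i = Polynomial.smult (c j * cc j g k) (tmult q ((gens ! g) i) (tmatpow q d D k i l))" for j g k i
  have "(\<Sum>j<d. Polynomial.smult (c j) (if l = j then Polynomial.monom 1 L else 0))
      = (\<Sum>j<d. if j = l then Polynomial.monom (c l) L else 0)"
    by (intro sum.cong HOL.refl) (auto simp: smult_monom)
  also have "\<dots> = Polynomial.monom (c l) L" using l by (simp add: sum.delta)
  finally have "Polynomial.monom (c l) L = (\<Sum>j<d. Polynomial.smult (c j) (if l = j then Polynomial.monom 1 L else 0))" ..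
  also have "\<dots> = (\<Sum>j<d. \<Sum>g<?G. \<Sum>k<N j. \<Sum>i<d. T j g k i)"
  proof (rule sum.cong[OF HOL.refl])
    fix j assume "j \<in> {..<d}"
    hence j: "j < d" by simp
    have "Polynomial.smult (c j) (if l = j then Polynomial.monom 1 L else 0) =
      Polynomial.smult (c j) (\<Sum>g<length gens. \<Sum>k<N j. tmotive_scal (cc j g k) (trowmul q d (gens ! g) (tmatpow q d D k)) l)"
      by (subst NC[OF j l]) (rule HOL.refl)
    also have "\<dots> = (\<Sum>g<?G. \<Sum>k<N j. \<Sum>i<d. T j g k i)"
      by (simp add: tmotive_scal_def trowmul_def smult_sum_right T_def)
    finally show "Polynomial.smult (c j) (if l = j then Polynomial.monom 1 L else 0) = (\<Sum>g<?G. \<Sum>k<N j. \<Sum>i<d. T j g k i)" .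
  qed
  also have "\<dots> = (\<Sum>j<d. \<Sum>g<?G. \<Sum>k<n. if k < N j then (\<Sum>i<d. T j g k i) else 0)"
    by (rule sum.cong[OF HOL.refl], rule sum.cong[OF HOL.refl], rule sum_restrict_lt[symmetric]) (auto intro: Nn)
  also have "\<dots> = (\<Sum>j<d. \<Sum>g<?G. \<Sum>k<n. \<Sum>i<d. if k < N j then T j g k i else 0)"
    by (intro sum.cong HOL.refl) simp
  also have "\<dots> = (\<Sum>j<d. \<Sum>k<n. \<Sum>g<?G. \<Sum>i<d. if k < N j then T j g k i else 0)"
    by (rule sum.cong[OF HOL.refl], rule sum.swap)
  also have "\<dots> = (\<Sum>k<n. \<Sum>j<d. \<Sum>g<?G. \<Sum>i<d. if k < N j then T j g k i else 0)"
    by (rule sum.swap)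
  also have "\<dots> = (\<Sum>k<n. \<Sum>j<d. \<Sum>i<d. \<Sum>g<?G. if k < N j then T j g k i else 0)"
    by (rule sum.cong[OF HOL.refl], rule sum.cong[OF HOL.refl], rule sum.swap)
  also have "\<dots> = (\<Sum>k<n. \<Sum>i<d. \<Sum>j<d. \<Sum>g<?G. if k < N j then T j g k i else 0)"
    by (rule sum.cong[OF HOL.refl], rule sum.swap)
  also have "\<dots> = (\<Sum>k<n. \<Sum>i<d. tmult q (\<Sum>j<d. \<Sum>g<?G.
      if k < N j then Polynomial.smult (c j * cc j g k) ((gens ! g) i) else 0) (tmatpow q d D k i l))"
    unfolding T_def by (intro sum.cong HOL.refl) (simp add: tmult_sum_left tmult_smult_left tmult_if0 cong: if_cong)
  finally show ?thesis .
qed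

end

lemma nat_le_sum: "finite A \<Longrightarrow> i \<in> A \<Longrightarrow> (f i :: nat) \<le> sum f A"
  by (rule member_le_sum) auto

context frobq
begin

lemma init_INV:
  assumes ab: "is_abelian q d (D::'k tmat)" and d0: "0 < d"
  shows "\<exists>n\<ge>1. 1 \<le> max_tdeg q d D n \<and> INV q (n * d) d (max_tdeg q d D n) (block_col q d D n (max_tdeg q d D n))"
proof -
  obtain gens :: "(nat \<Rightarrow> 'k poly) list" where G: "\<forall>m. \<exists>N c. \<forall>j<d. m j = (\<Sum>g<length gens. \<Sum>k<N.
      tmotive_scal (c g k) (trowmul q d (gens ! g) (tmatpow q d D k)) j)"
    using ab unfolding is_abelian_def by blast
  define R where "R = (\<Sum>g<length gens. \<Sum>i<d. degree ((gens ! g) i))"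
  have degG: "degree ((gens ! g) i) \<le> R" if "g < length gens" "i < d" for g i
  proof -
    have "degree ((gens ! g) i) \<le> (\<Sum>i<d. degree ((gens ! g) i))" using that by (intro nat_le_sum) auto
    also have "\<dots> \<le> R" unfolding R_def using that by (intro nat_le_sum) auto
    finally show ?thesis .
  qed
  define L where "L = Suc R"
  have ex: "\<forall>j. \<exists>Nc. \<forall>l<d. (if l = j then Polynomial.monom 1 L else 0) = (\<Sum>g<length gens. \<Sum>k<fst Nc.
      tmotive_scal (snd Nc g k) (trowmul q d (gens ! g) (tmatpow q d D k)) l)"
  proof
    fix j
    obtain Nj cj where "\<forall>l<d. (\<lambda>l. if l = j then Polynomial.monom 1 L else 0) l = (\<Sum>g<length gens. \<Sum>k<Nj.
      tmotive_scal (cj g k) (trowmul q d (gens ! g) (tmatpow q d D k)) l)"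
      using G[rule_format, of "\<lambda>l. if l = j then Polynomial.monom 1 L else 0"] by blast
    thus "\<exists>Nc. \<forall>l<d. (if l = j then Polynomial.monom 1 L else 0) = (\<Sum>g<length gens. \<Sum>k<fst Nc.
      tmotive_scal (snd Nc g k) (trowmul q d (gens ! g) (tmatpow q d D k)) l)"
      by (intro exI[of _ "(Nj, cj)"]) simp
  qed
  obtain f where f: "\<forall>j. \<forall>l<d. (if l = j then Polynomial.monom 1 L else 0) = (\<Sum>g<length gens. \<Sum>k<fst (f j).
      tmotive_scal (snd (f j) g k) (trowmul q d (gens ! g) (tmatpow q d D k)) l)"
    using choice[OF ex] by blast
  define N where "N j = fst (f j)" for j
  define cc where "cc j = snd (f j)" for j
  have NC: "\<And>j l. j < d \<Longrightarrow> l < d \<Longrightarrow> (if l = j then Polynomial.monom 1 L else 0) =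
      (\<Sum>g<length gens. \<Sum>k<N j. tmotive_scal (cc j g k) (trowmul q d (gens ! g) (tmatpow q d D k)) l)"
    using f unfolding N_def cc_def by blast
  define n where "n = Suc (\<Sum>j<d. N j)"
  have Nn: "N j \<le> n" if "j < d" for j
  proof -
    have "N j \<le> (\<Sum>j<d. N j)" using that by (intro nat_le_sum) auto
    thus ?thesis unfolding n_def by simp
  qed
  have NLn: "N j < n" if "j < d" for j
  proof -
    have "N j \<le> (\<Sum>j<d. N j)" using that by (intro nat_le_sum) auto
    thus ?thesis unfolding n_def by simp
  qed
  have n1: "1 \<le> n" unfolding n_def by simp
  define s where "s = max_tdeg q d D n"
  have finS: "finite {degree (tmatpow q d D k i j) | k i j. 1 \<le> k \<and> k \<le> n \<and> i < d \<and> j < d}"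
  proof (rule finite_subset)
    show "{degree (tmatpow q d D k i j) | k i j. 1 \<le> k \<and> k \<le> n \<and> i < d \<and> j < d}
      \<subseteq> (\<lambda>(k, i, j). degree (tmatpow q d D k i j)) ` ({..n} \<times> {..<d} \<times> {..<d})"
    proof
      fix x assume "x \<in> {degree (tmatpow q d D k i j) | k i j. 1 \<le> k \<and> k \<le> n \<and> i < d \<and> j < d}"
      then obtain k i j where kij: "x = degree (tmatpow q d D k i j)" "k \<le> n" "i < d" "j < d" by blast
      show "x \<in> (\<lambda>(k, i, j). degree (tmatpow q d D k i j)) ` ({..n} \<times> {..<d} \<times> {..<d})"
        by (rule image_eqI[where x="(k, i, j)"]) (use kij in auto)
    qed
  qed simp
  have degD: "degree (tmatpow q d D k i l) \<le> s" if "1 \<le> k" "k \<le> n" "i < d" "l < d" for k i l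
    unfolding s_def max_tdeg_def using finS that by (intro Max_ge) auto
  have degD0: "degree (tmatpow q d D 0 i l) = 0" for i l by (simp add: tmat_one_def)
  have degDall: "degree (tmatpow q d D k i l) \<le> s" if "k \<le> n" "i < d" "l < d" for k i l
  proof (cases k)
    case 0 thus ?thesis using degD0 by simp
  next
    case (Suc k') show ?thesis by (rule degD) (use Suc that in auto)
  qed
  define b where "b c k i = (\<Sum>j<d. \<Sum>g<length gens.
      if k < N j then Polynomial.smult (c j * cc j g k) ((gens ! g) i) else 0)" for c :: "nat \<Rightarrow> 'k" and k i
  have degb: "degree (b c k i) \<le> R" if "i < d" for c k i
    unfolding b_def
    by (intro degree_sum_le finite_lessThan)
       (auto intro: order.trans[OF degree_smult_le] degG that)
  have PI: "Polynomial.monom (c l) L = (\<Sum>k<n. \<Sum>i<d. tmult q (b c k i) (tmatpow q d D k i l))" if "l < d" for c l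
    unfolding b_def by (rule poly_identity[OF NC Nn that])
  have nN: "\<not> n < N j" if "j < d" for j using NLn[OF that] by simp
  have bn: "b c n i = 0" for c i unfolding b_def by (simp add: nN)
  have shift: "(\<Sum>k<n. \<Sum>i<d. tmult q (b c (Suc k) i) (tmatpow q d D (Suc k) i l))
     = Polynomial.monom (c l) L - (\<Sum>i<d. tmult q (b c 0 i) (tmatpow q d D 0 i l))" if "l < d" for c l
  proof -
    define F where "F k = (\<Sum>i<d. tmult q (b c k i) (tmatpow q d D k i l))" for k
    have "(\<Sum>k<Suc n. F k) = F 0 + (\<Sum>k<n. F (Suc k))" by (rule sum.lessThan_Suc_shift)
    moreover have "(\<Sum>k<Suc n. F k) = (\<Sum>k<n. F k)" using bn by (simp add: F_def)
    ultimately have e: "F 0 + (\<Sum>k<n. F (Suc k)) = (\<Sum>k<n. F k)" by simp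
    hence "(\<Sum>k<n. F (Suc k)) = (\<Sum>k<n. F k) - F 0" by (metis add_diff_cancel_left')
    thus ?thesis using PI[OF that, of c] by (simp add: F_def)
  qed
  have degW0: "degree (\<Sum>i<d. tmult q (b c 0 i) (tmatpow q d D 0 i l)) \<le> R" for c l
  proof (intro degree_sum_le finite_lessThan)
    fix p assume "p \<in> {..<d}"
    hence "degree (b c 0 p) \<le> R" by (simp add: degb)
    moreover have "degree (tmatpow q d D 0 p l) = 0" by (rule degD0)
    ultimately show "degree (tmult q (b c 0 p) (tmatpow q d D 0 p l)) \<le> R"
      using degree_tmult[of "b c 0 p" "tmatpow q d D 0 p l"] by linarith
  qed
  have s1: "1 \<le> s"
  proof (rule ccontr)
    assume "\<not> 1 \<le> s" hence s0: "s = 0" by simp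
    have "degree (\<Sum>k<n. \<Sum>i<d. tmult q (b (\<lambda>_. 1) k i) (tmatpow q d D k i 0)) \<le> R + s"
    proof (intro degree_sum_le finite_lessThan)
      fix k i assume "k \<in> {..<n}" "i \<in> {..<d}"
      hence "degree (tmatpow q d D k i 0) \<le> s" using degDall d0 by simp
      thus "degree (tmult q (b (\<lambda>_. 1) k i) (tmatpow q d D k i 0)) \<le> R + s"
        using degb[of i "\<lambda>_. 1" k] \<open>i \<in> {..<d}\<close> by (intro order.trans[OF degree_tmult]) auto
    qed
    hence "degree (Polynomial.monom (1::'k) L) \<le> R" using PI[OF d0, of "\<lambda>_. 1"] s0 by simp
    thus False by (simp add: L_def degree_monom_eq)
  qed
  have "INV q (n * d) d s (block_col q d D n s)"
    unfolding INV_def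
  proof
    fix v :: "nat \<Rightarrow> 'k"
    define c where "c l = v l ^ (q ^ (s + R))" for l
    define a where "a r = gsh q (s + R) R (b c (r div d + 1) (r mod d))" for r
    define W0 where "W0 l = (\<Sum>i<d. tmult q (b c 0 i) (tmatpow q d D 0 i l))" for l
    define w where "w l = gsh q (s + R) (R + s) (Polynomial.monom (c l) L - W0 l)" for l
    have "lspan q (n * d) d (block_col q d D n s) w" unfolding lspan_def
    proof (intro exI[of _ a] allI impI)
      fix l assume l: "l < d"
      have "(\<Sum>r<n * d. smul q (a r) (block_col q d D n s r l))
        = (\<Sum>r<n * d. gsh q (s + R) (R + s) (tmult q (b c (r div d + 1) (r mod d)) (tmatpow q d D (r div d + 1) (r mod d) l)))"
      proof (rule sum.cong[OF HOL.refl])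
        fix r assume "r \<in> {..<n * d}"
        hence r: "r div d < n" "r mod d < d" using d0 by (auto simp: less_mult_imp_div_less)
        have dD: "degree (tmatpow q d D (r div d + 1) (r mod d) l) \<le> s" by (rule degD) (use r l in auto)
        have dB: "degree (b c (r div d + 1) (r mod d)) \<le> R" using degb r by simp
        have "smul q (a r) (block_col q d D n s r l)
          = smul q (gsh q (s + R) R (b c (r div d + 1) (r mod d))) (gsh q (s + R - R) s (tmatpow q d D (r div d + 1) (r mod d) l))"
          by (simp add: a_def block_col_def sigma_shift_gsh)
        also have "\<dots> = gsh q (s + R) (R + s) (tmult q (b c (r div d + 1) (r mod d)) (tmatpow q d D (r div d + 1) (r mod d) l))"
          by (rule gsh_prod) (use dD dB in auto)
        finally show "smul q (a r) (block_col q d D n s r l) = gsh q (s + R) (R + s) (tmult q (b c (r div d + 1) (r mod d)) (tmatpow q d D (r div d + 1) (r mod d) l))" .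
      qed
      also have "\<dots> = gsh q (s + R) (R + s) (\<Sum>r<n * d. tmult q (b c (r div d + 1) (r mod d)) (tmatpow q d D (r div d + 1) (r mod d) l))"
        by (simp add: gsh_sum)
      also have "(\<Sum>r<n * d. tmult q (b c (r div d + 1) (r mod d)) (tmatpow q d D (r div d + 1) (r mod d) l))
        = (\<Sum>k<n. \<Sum>i<d. tmult q (b c (Suc k) i) (tmatpow q d D (Suc k) i l))"
        using sum_divmod[where f="\<lambda>k i. tmult q (b c (Suc k) i) (tmatpow q d D (Suc k) i l)" and n=n and d=d] by simp
      also have "\<dots> = Polynomial.monom (c l) L - W0 l" using shift[OF l] by (simp add: W0_def)
      finally show "w l = (\<Sum>r<n * d. smul q (a r) (block_col q d D n s r l))" by (simp add: w_def)
    qed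
    moreover have "\<forall>l<d. \<forall>n'<s. w l n' = (if n' = s - 1 then v l else 0)"
    proof (intro allI impI)
      fix l n' assume l: "l < d" and n': "n' < s"
      have "Polynomial.coeff (W0 l) (R + s - n') = 0"
        using degW0[of c l] n' by (intro coeff_eq_0) (simp add: W0_def)
      hence "w l n' = Fi (s + R) (Polynomial.coeff (Polynomial.monom (c l) L) (R + s - n'))"
        using n' by (simp add: w_def gsh_def)
      also have "\<dots> = (if n' = s - 1 then v l else 0)"
        using n' s1 by (auto simp: coeff_monom L_def c_def Fi_pow)
      finally show "w l n' = (if n' = s - 1 then v l else 0)" .
    qed
    ultimately show "\<exists>w. lspan q (n * d) d (block_col q d D n s) w \<and>
        (\<forall>k<d. \<forall>n<s. w k n = (if n = s - 1 then v k else 0))" by blast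
  qed
  thus ?thesis using n1 s1 unfolding s_def by blast
qed

end

lemma frob_of_subfield:
  fixes Fq :: "'k::field set"
  assumes sf: "is_subfield Fq" and fin: "finite Fq" and cq: "card Fq = q"
    and pf: "perfect_field TYPE('k)"
  shows "frobq TYPE('k) q"
proof -
  define p where "p = CHAR('k)"
  have ppos: "p > 0" using char_pos_of_finite_subfield[OF sf fin] p_def by simp
  have pprime: "prime p" using ppos prime_CHAR_semidom[where ?'a='k] p_def by simp
  obtain e where e: "q = p ^ e" using card_subfield_prime_power[OF sf fin] cq p_def by auto
  have add: "(x + y) ^ q = x ^ q + y ^ q" for x y :: 'k
    by (rule freshmans_dream') (use pprime e p_def in auto)
  have qpos: "q > 0" using e ppos by simp
  have inj: "inj (\<lambda>x::'k. x ^ q)"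
  proof (rule injI)
    fix x y :: 'k assume "x ^ q = y ^ q"
    moreover have "x ^ q = (x - y) ^ q + y ^ q" using add[of "x - y" y] by simp
    ultimately have "(x - y) ^ q = 0" by simp
    thus "x = y" using qpos by simp
  qed
  have sp: "surj (\<lambda>x::'k. x ^ p)" using pf ppos unfolding perfect_field_def p_def by auto
  have "surj (\<lambda>x::'k. x ^ (p ^ k))" for k
  proof (induction k)
    case 0 show ?case by simp
  next
    case (Suc k)
    show ?case unfolding surj_def
    proof
      fix y :: 'k
      obtain z where z: "z ^ p = y" using sp by (metis surjD)
      obtain w where w: "w ^ (p ^ k) = z" using Suc by (metis surjD)
      have "w ^ (p ^ Suc k) = (w ^ (p ^ k)) ^ p" by (simp only: power_Suc2 power_mult)
      hence "y = w ^ (p ^ Suc k)" using w z by simp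
      thus "\<exists>x. y = x ^ (p ^ Suc k)" by blast
    qed
  qed
  hence "surj (\<lambda>x::'k. x ^ q)" using e by simp
  hence "bij (\<lambda>x::'k. x ^ q)" using inj by (simp add: bij_def)
  thus ?thesis using add by (intro frobq.intro) auto
qed

theorem proposition6p4:
  fixes q :: nat and Fq :: "'k::field set" and \<theta> :: 'k
    and d :: nat and D :: "'k tmat"
  assumes "is_subfield Fq" and "finite Fq" and "card Fq = q"
    and "perfect_field TYPE('k)"
    and "is_tmodule \<theta> d D"
    and "is_abelian q d D"
  shows "\<exists>n\<ge>1. rank_mod_sigma q (n * d) d (block_col q d D n (max_tdeg q d D n))
                   (max_tdeg q d D n) d"
proof (cases "d = 0")
  case True
  have "rank_mod_sigma q (1 * d) d (block_col q d D 1 (max_tdeg q d D 1)) (max_tdeg q d D 1) d"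
    unfolding rank_mod_sigma_def using True
    by (intro exI[of _ "block_col q d D 1 (max_tdeg q d D 1)"] exI[of _ "\<lambda>_. 0"])
       (simp add: selem_reach.refl)
  thus ?thesis by (intro exI[of _ 1]) simp
next
  case False
  hence d0: "0 < d" by simp
  have fq: "frobq TYPE('k) q" by (rule frob_of_subfield) (use assms in auto)
  obtain n where n: "n \<ge> 1" "1 \<le> max_tdeg q d D n"
    and inv: "INV q (n * d) d (max_tdeg q d D n) (block_col q d D n (max_tdeg q d D n))"
    using frobq.init_INV[OF fq assms(6) d0] by blast
  define s where "s = max_tdeg q d D n"
  define B where "B = block_col q d D n s"
  have cm: "d \<le> n * d" using n(1) by simp
  have dg0: "diagup (n * d) d s 0 B (\<lambda>_. 0)" by (simp add: diagup_def)
  obtain C \<nu>' where C: "selem_reach q (n * d) d B C"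
    "\<forall>i<n * d. \<forall>j<d. C i j = (if i = j then spow (\<nu>' i) else 0)" "\<forall>i<d. \<nu>' i < s"
    using frobq.smith[OF fq _ cm, of s B 0 "\<lambda>_. 0"] n(2) inv dg0 unfolding s_def B_def by auto
  have "{i. i < min (n * d) d \<and> \<nu>' i < s} = {..<d}" using cm C(3) by auto
  hence "card {i. i < min (n * d) d \<and> \<nu>' i < s} = d" by simp
  moreover have C2: "\<forall>i<n * d. \<forall>j<d. C i j = (if i = j then spow (\<nu>' i) else szero)"
    using C(2) by (simp add: frobq.szero_eq[OF fq])
  ultimately have "rank_mod_sigma q (n * d) d B s d"
    unfolding rank_mod_sigma_def using C(1) by blast
  thus ?thesis using n(1) unfolding B_def s_def by blast
qed


end
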